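(* Let $\mathbf{k}$ be a commutative ring in which $2$ is invertible, and let $\mathcal{C}$ be a $\mathbf{k}$-linear supercategory whose underlying additive category is idempotent-complete. Then $(\mathcal{C}^{ct})^{ct}$ is equivalent to $\mathcal{C}$ as a supercategory.
   Context: An additive category is idempotent-complete if $\ker(p)$ exists for every object $X$ and $p\in\mathrm{End}(X)$ with $p^2=p$. A supercategory is a $\mathbf{k}$-linear additive category $\mathcal{C}$ with an endofunctor $\Pi$ and an isomorphism $\xi:\Pi^2\xrightarrow\sim\mathrm{id}$ with $\xi\circ\Pi=\Pi\circ\xi$. A superfunctor is a functor $F$ with an isomorphism $\alpha_F:F\Pi\xrightarrow\sim\Pi'F$ such that $(\xi'F)\circ(\Pi'\alpha_F)\circ(\alpha_F\Pi)=F\xi$; an equivalence of supercategories is a superfunctor whose functor is an equivalence. The Clifford twist $\mathcal{C}^{ct}$ has objects $(X,\varphi)$ with $\varphi:\Pi X\xrightarrow\sim X$, $\varphi\circ\Pi\varphi=\xi_X$, morphisms $f:X\to X'$ with $f\varphi=\varphi'\Pi f$, $\Pi^{ct}(X,\varphi)=(X,-\varphi)$, and $\xi^{ct}=\mathrm{id}$. *)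

theory Defs
  imports Main
begin

text \<open>Composition  Cmp X Y Z g f  is  g after f  for
  f : X -> Y, g : Y -> Z.\<close>

record ('o, 'm, 'k) lcat =
  Ob   :: "'o set"
  Hom  :: "'o \<Rightarrow> 'o \<Rightarrow> 'm set"
  Cmp  :: "'o \<Rightarrow> 'o \<Rightarrow> 'o \<Rightarrow> 'm \<Rightarrow> 'm \<Rightarrow> 'm"
  Id   :: "'o \<Rightarrow> 'm"
  Add  :: "'o \<Rightarrow> 'o \<Rightarrow> 'm \<Rightarrow> 'm \<Rightarrow> 'm"
  Zero :: "'o \<Rightarrow> 'o \<Rightarrow> 'm"
  Smul :: "'o \<Rightarrow> 'o \<Rightarrow> 'k \<Rightarrow> 'm \<Rightarrow> 'm"

text \<open>Supercategory data: endofunctor Pi (object and arrow part) and xi : Pi^2 -> id.\<close>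

record ('o, 'm, 'k) scat = "('o, 'm, 'k) lcat" +
  PiO :: "'o \<Rightarrow> 'o"
  PiA :: "'o \<Rightarrow> 'o \<Rightarrow> 'm \<Rightarrow> 'm"
  Xi  :: "'o \<Rightarrow> 'm"

definition category where
  "category C \<longleftrightarrow>
    (\<forall>X\<in>Ob C. Id C X \<in> Hom C X X) \<and>
    (\<forall>X\<in>Ob C. \<forall>Y\<in>Ob C. \<forall>Z\<in>Ob C. \<forall>f\<in>Hom C X Y. \<forall>g\<in>Hom C Y Z.
        Cmp C X Y Z g f \<in> Hom C X Z) \<and>
    (\<forall>X\<in>Ob C. \<forall>Y\<in>Ob C. \<forall>f\<in>Hom C X Y.
        Cmp C X Y Y (Id C Y) f = f \<and> Cmp C X X Y f (Id C X) = f) \<and>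
    (\<forall>W\<in>Ob C. \<forall>X\<in>Ob C. \<forall>Y\<in>Ob C. \<forall>Z\<in>Ob C.
       \<forall>f\<in>Hom C W X. \<forall>g\<in>Hom C X Y. \<forall>h\<in>Hom C Y Z.
        Cmp C W Y Z h (Cmp C W X Y g f) = Cmp C W X Z (Cmp C X Y Z h g) f)"

definition klinear :: "('o, 'm, 'k::comm_ring_1, 'z) lcat_scheme \<Rightarrow> bool" where
  "klinear C \<longleftrightarrow>
    (\<forall>X\<in>Ob C. \<forall>Y\<in>Ob C.
       Zero C X Y \<in> Hom C X Y \<and>
       (\<forall>f\<in>Hom C X Y. \<forall>g\<in>Hom C X Y. Add C X Y f g \<in> Hom C X Y) \<and>
       (\<forall>a. \<forall>f\<in>Hom C X Y. Smul C X Y a f \<in> Hom C X Y) \<and>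
       (\<forall>f\<in>Hom C X Y. \<forall>g\<in>Hom C X Y. \<forall>h\<in>Hom C X Y.
          Add C X Y (Add C X Y f g) h = Add C X Y f (Add C X Y g h)) \<and>
       (\<forall>f\<in>Hom C X Y. \<forall>g\<in>Hom C X Y. Add C X Y f g = Add C X Y g f) \<and>
       (\<forall>f\<in>Hom C X Y. Add C X Y (Zero C X Y) f = f) \<and>
       (\<forall>f\<in>Hom C X Y. \<exists>g\<in>Hom C X Y. Add C X Y f g = Zero C X Y) \<and>
       (\<forall>a. \<forall>f\<in>Hom C X Y. \<forall>g\<in>Hom C X Y.
          Smul C X Y a (Add C X Y f g) = Add C X Y (Smul C X Y a f) (Smul C X Y a g)) \<and>
       (\<forall>a b. \<forall>f\<in>Hom C X Y.
          Smul C X Y (a + b) f = Add C X Y (Smul C X Y a f) (Smul C X Y b f)) \<and>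
       (\<forall>a b. \<forall>f\<in>Hom C X Y. Smul C X Y (a * b) f = Smul C X Y a (Smul C X Y b f)) \<and>
       (\<forall>f\<in>Hom C X Y. Smul C X Y 1 f = f)) \<and>
    (\<forall>X\<in>Ob C. \<forall>Y\<in>Ob C. \<forall>Z\<in>Ob C. \<forall>f\<in>Hom C X Y. \<forall>f'\<in>Hom C X Y.
       \<forall>g\<in>Hom C Y Z. \<forall>g'\<in>Hom C Y Z.
       Cmp C X Y Z g (Add C X Y f f') = Add C X Z (Cmp C X Y Z g f) (Cmp C X Y Z g f') \<and>
       Cmp C X Y Z (Add C Y Z g g') f = Add C X Z (Cmp C X Y Z g f) (Cmp C X Y Z g' f) \<and>
       (\<forall>a. Cmp C X Y Z g (Smul C X Y a f) = Smul C X Z a (Cmp C X Y Z g f) \<and>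
            Cmp C X Y Z (Smul C Y Z a g) f = Smul C X Z a (Cmp C X Y Z g f)))"

definition additive :: "('o, 'm, 'k::comm_ring_1, 'z) lcat_scheme \<Rightarrow> bool" where
  "additive C \<longleftrightarrow> category C \<and> klinear C \<and>
    (\<exists>Z\<in>Ob C. Id C Z = Zero C Z Z) \<and>
    (\<forall>X\<in>Ob C. \<forall>Y\<in>Ob C. \<exists>S\<in>Ob C.
       \<exists>p1\<in>Hom C S X. \<exists>p2\<in>Hom C S Y. \<exists>i1\<in>Hom C X S. \<exists>i2\<in>Hom C Y S.
         Cmp C X S X p1 i1 = Id C X \<and> Cmp C Y S Y p2 i2 = Id C Y \<and>
         Cmp C Y S X p1 i2 = Zero C Y X \<and> Cmp C X S Y p2 i1 = Zero C X Y \<and>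
         Add C S S (Cmp C S X S i1 p1) (Cmp C S Y S i2 p2) = Id C S)"

definition is_kernel where
  "is_kernel C X Y p K k \<longleftrightarrow> K \<in> Ob C \<and> k \<in> Hom C K X \<and>
     Cmp C K X Y p k = Zero C K Y \<and>
     (\<forall>W\<in>Ob C. \<forall>f\<in>Hom C W X. Cmp C W X Y p f = Zero C W Y \<longrightarrow>
        (\<exists>g\<in>Hom C W K. Cmp C W K X k g = f \<and>
           (\<forall>g'\<in>Hom C W K. Cmp C W K X k g' = f \<longrightarrow> g' = g)))"

definition idem_complete where
  "idem_complete C \<longleftrightarrow>
    (\<forall>X\<in>Ob C. \<forall>p\<in>Hom C X X. Cmp C X X X p p = p \<longrightarrow>
       (\<exists>K k. is_kernel C X X p K k))"

definition iso where
  "iso C X Y f \<longleftrightarrow> f \<in> Hom C X Y \<and>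
     (\<exists>g\<in>Hom C Y X. Cmp C X Y X g f = Id C X \<and> Cmp C Y X Y f g = Id C Y)"

definition functor_on where
  "functor_on C D FO FA \<longleftrightarrow>
    (\<forall>X\<in>Ob C. FO X \<in> Ob D) \<and>
    (\<forall>X\<in>Ob C. \<forall>Y\<in>Ob C. \<forall>f\<in>Hom C X Y. FA X Y f \<in> Hom D (FO X) (FO Y)) \<and>
    (\<forall>X\<in>Ob C. FA X X (Id C X) = Id D (FO X)) \<and>
    (\<forall>X\<in>Ob C. \<forall>Y\<in>Ob C. \<forall>Z\<in>Ob C. \<forall>f\<in>Hom C X Y. \<forall>g\<in>Hom C Y Z.
       FA X Z (Cmp C X Y Z g f) = Cmp D (FO X) (FO Y) (FO Z) (FA Y Z g) (FA X Y f))"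

definition nat_iso where
  "nat_iso C D FO FA GO GA eta \<longleftrightarrow>
    (\<forall>X\<in>Ob C. iso D (FO X) (GO X) (eta X)) \<and>
    (\<forall>X\<in>Ob C. \<forall>Y\<in>Ob C. \<forall>f\<in>Hom C X Y.
       Cmp D (FO X) (GO X) (GO Y) (GA X Y f) (eta X) =
       Cmp D (FO X) (FO Y) (GO Y) (eta Y) (FA X Y f))"

definition equivalence where
  "equivalence C D FO FA \<longleftrightarrow> functor_on C D FO FA \<and>
    (\<exists>GO GA eta eps. functor_on D C GO GA \<and>
       nat_iso C C (\<lambda>X. GO (FO X)) (\<lambda>X Y f. GA (FO X) (FO Y) (FA X Y f))
                   (\<lambda>X. X) (\<lambda>X Y f. f) eta \<and>
       nat_iso D D (\<lambda>X. FO (GO X)) (\<lambda>X Y f. FA (GO X) (GO Y) (GA X Y f))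
                   (\<lambda>X. X) (\<lambda>X Y f. f) eps)"

definition supercategory :: "('o, 'm, 'k::comm_ring_1, 'z) scat_scheme \<Rightarrow> bool" where
  "supercategory C \<longleftrightarrow> additive C \<and>
    functor_on C C (PiO C) (PiA C) \<and>
    nat_iso C C (\<lambda>X. PiO C (PiO C X))
                (\<lambda>X Y f. PiA C (PiO C X) (PiO C Y) (PiA C X Y f))
                (\<lambda>X. X) (\<lambda>X Y f. f) (Xi C) \<and>
    (\<forall>X\<in>Ob C. Xi C (PiO C X) = PiA C (PiO C (PiO C X)) X (Xi C X))"

definition superfunctor where
  "superfunctor C D FO FA alpha \<longleftrightarrow> functor_on C D FO FA \<and>
    nat_iso C D (\<lambda>X. FO (PiO C X)) (\<lambda>X Y f. FA (PiO C X) (PiO C Y) (PiA C X Y f))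
                (\<lambda>X. PiO D (FO X)) (\<lambda>X Y f. PiA D (FO X) (FO Y) (FA X Y f)) alpha \<and>
    (\<forall>X\<in>Ob C.
       Cmp D (FO (PiO C (PiO C X))) (PiO D (PiO D (FO X))) (FO X)
         (Xi D (FO X))
         (Cmp D (FO (PiO C (PiO C X))) (PiO D (FO (PiO C X))) (PiO D (PiO D (FO X)))
            (PiA D (FO (PiO C X)) (PiO D (FO X)) (alpha X))
            (alpha (PiO C X)))
       = FA (PiO C (PiO C X)) X (Xi C X))"

definition super_equivalence where
  "super_equivalence C D FO FA alpha \<longleftrightarrow>
     superfunctor C D FO FA alpha \<and> equivalence C D FO FA"

definition ct :: "('o, 'm, 'k::comm_ring_1) scat \<Rightarrow> ('o \<times> 'm, 'm, 'k) scat" where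
  "ct C = \<lparr>
     Ob = {(X, \<phi>). X \<in> Ob C \<and> iso C (PiO C X) X \<phi> \<and>
                    Cmp C (PiO C (PiO C X)) (PiO C X) X \<phi> (PiA C (PiO C X) X \<phi>) = Xi C X},
     Hom = (\<lambda>(X, \<phi>) (X', \<phi>'). {f \<in> Hom C X X'.
              Cmp C (PiO C X) X X' f \<phi> = Cmp C (PiO C X) (PiO C X') X' \<phi>' (PiA C X X' f)}),
     Cmp = (\<lambda>A B D g f. Cmp C (fst A) (fst B) (fst D) g f),
     Id = (\<lambda>A. Id C (fst A)),
     Add = (\<lambda>A B f g. Add C (fst A) (fst B) f g),
     Zero = (\<lambda>A B. Zero C (fst A) (fst B)),
     Smul = (\<lambda>A B a f. Smul C (fst A) (fst B) a f),
     PiO = (\<lambda>(X, \<phi>). (X, Smul C (PiO C X) X (-1) \<phi>)),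
     PiA = (\<lambda>A B f. f),
     Xi = (\<lambda>A. Id C (fst A)) \<rparr>"

end

theory Submission
  imports Defs
begin


locale SC =
  fixes C :: "('o, 'm, 'k::comm_ring_1) scat"
  assumes sup: "supercategory C"
begin

lemma addC: "additive C" using sup unfolding supercategory_def by blast
lemma catC: "category C" using addC unfolding additive_def by blast
lemma linC: "klinear C" using addC unfolding additive_def by blast

lemma id_hom[simp]: "X \<in> Ob C \<Longrightarrow> Id C X \<in> Hom C X X"
  using catC unfolding category_def by blast
lemma cmp_hom[simp]: "X \<in> Ob C \<Longrightarrow> Y \<in> Ob C \<Longrightarrow> Z \<in> Ob C \<Longrightarrow> f \<in> Hom C X Y \<Longrightarrow> g \<in> Hom C Y Z
   \<Longrightarrow> Cmp C X Y Z g f \<in> Hom C X Z"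
  using catC unfolding category_def by blast
lemma id_l[simp]: "X \<in> Ob C \<Longrightarrow> Y \<in> Ob C \<Longrightarrow> f \<in> Hom C X Y \<Longrightarrow> Cmp C X Y Y (Id C Y) f = f"
  using catC unfolding category_def by blast
lemma id_r[simp]: "X \<in> Ob C \<Longrightarrow> Y \<in> Ob C \<Longrightarrow> f \<in> Hom C X Y \<Longrightarrow> Cmp C X X Y f (Id C X) = f"
  using catC unfolding category_def by blast
lemma assoc[simp]: "W \<in> Ob C \<Longrightarrow> X \<in> Ob C \<Longrightarrow> Y \<in> Ob C \<Longrightarrow> Z \<in> Ob C \<Longrightarrow>
   f \<in> Hom C W X \<Longrightarrow> g \<in> Hom C X Y \<Longrightarrow> h \<in> Hom C Y Z \<Longrightarrow>
   Cmp C W X Z (Cmp C X Y Z h g) f = Cmp C W Y Z h (Cmp C W X Y g f)"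
  by (rule catC[unfolded category_def, THEN conjunct2, THEN conjunct2, THEN conjunct2, rule_format, symmetric])

lemmas linA = linC[unfolded klinear_def, THEN conjunct1, rule_format]
lemmas linB = linC[unfolded klinear_def, THEN conjunct2, rule_format]

lemmas zero_hom[simp] = linA[THEN conjunct1, rule_format]
lemmas add_hom[simp] = linA[THEN conjunct2, THEN conjunct1, rule_format]
lemmas smul_hom[simp] = linA[THEN conjunct2, THEN conjunct2, THEN conjunct1, rule_format]
lemmas add_assoc = linA[THEN conjunct2, THEN conjunct2, THEN conjunct2, THEN conjunct1, rule_format]
lemmas add_comm = linA[THEN conjunct2, THEN conjunct2, THEN conjunct2, THEN conjunct2, THEN conjunct1, rule_format]
lemmas zero_l[simp] = linA[THEN conjunct2, THEN conjunct2, THEN conjunct2, THEN conjunct2, THEN conjunct2, THEN conjunct1, rule_format]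
lemmas neg_ex = linA[THEN conjunct2, THEN conjunct2, THEN conjunct2, THEN conjunct2, THEN conjunct2, THEN conjunct2, THEN conjunct1, rule_format]
lemmas smul_add = linA[THEN conjunct2, THEN conjunct2, THEN conjunct2, THEN conjunct2, THEN conjunct2, THEN conjunct2, THEN conjunct2, THEN conjunct1, rule_format]
lemmas add_smul = linA[THEN conjunct2, THEN conjunct2, THEN conjunct2, THEN conjunct2, THEN conjunct2, THEN conjunct2, THEN conjunct2, THEN conjunct2, THEN conjunct1, rule_format]
lemmas smul_smul0 = linA[THEN conjunct2, THEN conjunct2, THEN conjunct2, THEN conjunct2, THEN conjunct2, THEN conjunct2, THEN conjunct2, THEN conjunct2, THEN conjunct2, THEN conjunct1, rule_format]
lemmas smul_one[simp] = linA[THEN conjunct2, THEN conjunct2, THEN conjunct2, THEN conjunct2, THEN conjunct2, THEN conjunct2, THEN conjunct2, THEN conjunct2, THEN conjunct2, THEN conjunct2, rule_format]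
lemmas cmp_add_r0 = linB[THEN conjunct1, rule_format]
lemmas cmp_add_l0 = linB[THEN conjunct2, THEN conjunct1, rule_format]
lemmas cmp_smul_r0 = linB[THEN conjunct2, THEN conjunct2, rule_format, THEN conjunct1]
lemmas cmp_smul_l0 = linB[THEN conjunct2, THEN conjunct2, rule_format, THEN conjunct2]
lemma cmp_add_r[simp]: "X \<in> Ob C \<Longrightarrow> Y \<in> Ob C \<Longrightarrow> Z \<in> Ob C \<Longrightarrow> f \<in> Hom C X Y \<Longrightarrow> f' \<in> Hom C X Y \<Longrightarrow> g \<in> Hom C Y Z \<Longrightarrow>
   Cmp C X Y Z g (Add C X Y f f') = Add C X Z (Cmp C X Y Z g f) (Cmp C X Y Z g f')"
  by (rule cmp_add_r0) 
lemma cmp_add_l[simp]: "X \<in> Ob C \<Longrightarrow> Y \<in> Ob C \<Longrightarrow> Z \<in> Ob C \<Longrightarrow> f \<in> Hom C X Y \<Longrightarrow> g \<in> Hom C Y Z \<Longrightarrow> g' \<in> Hom C Y Z \<Longrightarrow>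
   Cmp C X Y Z (Add C Y Z g g') f = Add C X Z (Cmp C X Y Z g f) (Cmp C X Y Z g' f)"
  by (rule cmp_add_l0) 
lemma cmp_smul_r[simp]: "X \<in> Ob C \<Longrightarrow> Y \<in> Ob C \<Longrightarrow> Z \<in> Ob C \<Longrightarrow> f \<in> Hom C X Y \<Longrightarrow> g \<in> Hom C Y Z \<Longrightarrow>
   Cmp C X Y Z g (Smul C X Y a f) = Smul C X Z a (Cmp C X Y Z g f)"
  by (rule cmp_smul_r0) 
lemma cmp_smul_l[simp]: "X \<in> Ob C \<Longrightarrow> Y \<in> Ob C \<Longrightarrow> Z \<in> Ob C \<Longrightarrow> f \<in> Hom C X Y \<Longrightarrow> g \<in> Hom C Y Z \<Longrightarrow>
   Cmp C X Y Z (Smul C Y Z a g) f = Smul C X Z a (Cmp C X Y Z g f)"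
  by (rule cmp_smul_l0) 
lemma zero_r[simp]: "X \<in> Ob C \<Longrightarrow> Y \<in> Ob C \<Longrightarrow> f \<in> Hom C X Y \<Longrightarrow> Add C X Y f (Zero C X Y) = f"
  using add_comm zero_l zero_hom by metis
lemma smul_smul[simp]: "X \<in> Ob C \<Longrightarrow> Y \<in> Ob C \<Longrightarrow> f \<in> Hom C X Y \<Longrightarrow>
   Smul C X Y a (Smul C X Y b f) = Smul C X Y (a * b) f"
  by (simp add: smul_smul0)

lemma add_cancel_l: assumes "X \<in> Ob C" "Y \<in> Ob C" "f \<in> Hom C X Y" "g \<in> Hom C X Y" "g' \<in> Hom C X Y"
  and "Add C X Y f g = Add C X Y f g'" shows "g = g'"
proof -
  obtain n where n: "n \<in> Hom C X Y" "Add C X Y f n = Zero C X Y" using neg_ex assms by blast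
  have "g = Add C X Y (Add C X Y f n) g" using assms n by simp
  also have "\<dots> = Add C X Y n (Add C X Y f g)" using assms n by (metis add_assoc add_comm)
  also have "\<dots> = Add C X Y n (Add C X Y f g')" using assms by simp
  also have "\<dots> = Add C X Y (Add C X Y f n) g'" using assms n by (metis add_assoc add_comm)
  also have "\<dots> = g'" using assms n by simp
  finally show ?thesis .
qed

lemma self_add_zero: "X \<in> Ob C \<Longrightarrow> Y \<in> Ob C \<Longrightarrow> f \<in> Hom C X Y \<Longrightarrow> Add C X Y f f = f \<Longrightarrow> f = Zero C X Y"
  by (metis add_cancel_l zero_hom zero_r)

lemma cmp_zero_r[simp]: "X \<in> Ob C \<Longrightarrow> Y \<in> Ob C \<Longrightarrow> Z \<in> Ob C \<Longrightarrow> g \<in> Hom C Y Z \<Longrightarrow>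
   Cmp C X Y Z g (Zero C X Y) = Zero C X Z"
  apply (rule self_add_zero, simp_all)
  by (metis cmp_add_r zero_hom zero_l)
lemma cmp_zero_l[simp]: "X \<in> Ob C \<Longrightarrow> Y \<in> Ob C \<Longrightarrow> Z \<in> Ob C \<Longrightarrow> f \<in> Hom C X Y \<Longrightarrow>
   Cmp C X Y Z (Zero C Y Z) f = Zero C X Z"
  apply (rule self_add_zero, simp_all)
  by (metis cmp_add_l zero_hom zero_l)
lemma smul_zero[simp]: "X \<in> Ob C \<Longrightarrow> Y \<in> Ob C \<Longrightarrow> Smul C X Y a (Zero C X Y) = Zero C X Y"
  apply (rule self_add_zero, simp_all)
  by (metis smul_add zero_hom zero_l)
lemma zero_smul[simp]: "X \<in> Ob C \<Longrightarrow> Y \<in> Ob C \<Longrightarrow> f \<in> Hom C X Y \<Longrightarrow> Smul C X Y 0 f = Zero C X Y"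
  apply (rule self_add_zero, simp_all)
  by (metis add_smul add_0)
lemma add_neg[simp]: "X \<in> Ob C \<Longrightarrow> Y \<in> Ob C \<Longrightarrow> f \<in> Hom C X Y \<Longrightarrow> Add C X Y f (Smul C X Y (-1) f) = Zero C X Y"
proof -
  assume a: "X \<in> Ob C" "Y \<in> Ob C" "f \<in> Hom C X Y"
  have "Smul C X Y (1 + -1) f = Add C X Y (Smul C X Y 1 f) (Smul C X Y (-1) f)" using a by (rule add_smul)
  thus ?thesis using a by simp
qed
lemma neg_unique: "X \<in> Ob C \<Longrightarrow> Y \<in> Ob C \<Longrightarrow> f \<in> Hom C X Y \<Longrightarrow> g \<in> Hom C X Y \<Longrightarrow>
   Add C X Y f g = Zero C X Y \<Longrightarrow> g = Smul C X Y (-1) f"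
  by (metis add_cancel_l add_neg smul_hom)

end



context SC
begin

lemma piF: "functor_on C C (PiO C) (PiA C)" using sup unfolding supercategory_def by blast
lemma xiN: "nat_iso C C (\<lambda>X. PiO C (PiO C X))
                (\<lambda>X Y f. PiA C (PiO C X) (PiO C Y) (PiA C X Y f))
                (\<lambda>X. X) (\<lambda>X Y f. f) (Xi C)" using sup unfolding supercategory_def by blast
lemma xi_pi0: "X \<in> Ob C \<Longrightarrow> Xi C (PiO C X) = PiA C (PiO C (PiO C X)) X (Xi C X)"
  using sup unfolding supercategory_def by blast

lemma pi_ob[simp]: "X \<in> Ob C \<Longrightarrow> PiO C X \<in> Ob C" using piF unfolding functor_on_def by blast
lemma pi_hom[simp]: "X \<in> Ob C \<Longrightarrow> Y \<in> Ob C \<Longrightarrow> f \<in> Hom C X Y \<Longrightarrow> PiA C X Y f \<in> Hom C (PiO C X) (PiO C Y)"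
  using piF unfolding functor_on_def by blast
lemma pi_id[simp]: "X \<in> Ob C \<Longrightarrow> PiA C X X (Id C X) = Id C (PiO C X)"
  using piF unfolding functor_on_def by blast
lemma pi_cmp[simp]: "X \<in> Ob C \<Longrightarrow> Y \<in> Ob C \<Longrightarrow> Z \<in> Ob C \<Longrightarrow> f \<in> Hom C X Y \<Longrightarrow> g \<in> Hom C Y Z \<Longrightarrow>
  PiA C X Z (Cmp C X Y Z g f) = Cmp C (PiO C X) (PiO C Y) (PiO C Z) (PiA C Y Z g) (PiA C X Y f)"
  using piF unfolding functor_on_def by blast
lemma xi_pi[simp]: "X \<in> Ob C \<Longrightarrow> PiA C (PiO C (PiO C X)) X (Xi C X) = Xi C (PiO C X)"
  using xi_pi0 by simp

lemma xi_iso: "X \<in> Ob C \<Longrightarrow> iso C (PiO C (PiO C X)) X (Xi C X)" using xiN unfolding nat_iso_def by blast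
lemma xi_hom[simp]: "X \<in> Ob C \<Longrightarrow> Xi C X \<in> Hom C (PiO C (PiO C X)) X" using xi_iso unfolding iso_def by blast
lemma xi_nat: "X \<in> Ob C \<Longrightarrow> Y \<in> Ob C \<Longrightarrow> f \<in> Hom C X Y \<Longrightarrow>
  Cmp C (PiO C (PiO C X)) X Y f (Xi C X) =
  Cmp C (PiO C (PiO C X)) (PiO C (PiO C Y)) Y (Xi C Y) (PiA C (PiO C X) (PiO C Y) (PiA C X Y f))"
  using xiN unfolding nat_iso_def by blast

definition xinv where "xinv X = (SOME g. g \<in> Hom C X (PiO C (PiO C X)) \<and>
   Cmp C (PiO C (PiO C X)) X (PiO C (PiO C X)) g (Xi C X) = Id C (PiO C (PiO C X)) \<and>
   Cmp C X (PiO C (PiO C X)) X (Xi C X) g = Id C X)"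

lemma xinv: "X \<in> Ob C \<Longrightarrow> xinv X \<in> Hom C X (PiO C (PiO C X)) \<and>
   Cmp C (PiO C (PiO C X)) X (PiO C (PiO C X)) (xinv X) (Xi C X) = Id C (PiO C (PiO C X)) \<and>
   Cmp C X (PiO C (PiO C X)) X (Xi C X) (xinv X) = Id C X"
  unfolding xinv_def by (rule someI_ex) (use xi_iso[unfolded iso_def] in blast)

lemma xinv_hom[simp]: "X \<in> Ob C \<Longrightarrow> xinv X \<in> Hom C X (PiO C (PiO C X))" using xinv by blast
lemma xinv_l[simp]: "X \<in> Ob C \<Longrightarrow> Cmp C (PiO C (PiO C X)) X (PiO C (PiO C X)) (xinv X) (Xi C X) = Id C (PiO C (PiO C X))" using xinv by blast
lemma xinv_r[simp]: "X \<in> Ob C \<Longrightarrow> Cmp C X (PiO C (PiO C X)) X (Xi C X) (xinv X) = Id C X" using xinv by blast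

lemma cancel_id[simp]: "Cmp C X Y X g f = Id C X \<Longrightarrow> W \<in> Ob C \<Longrightarrow> X \<in> Ob C \<Longrightarrow> Y \<in> Ob C \<Longrightarrow>
  f \<in> Hom C X Y \<Longrightarrow> g \<in> Hom C Y X \<Longrightarrow> h \<in> Hom C W X \<Longrightarrow> Cmp C W Y X g (Cmp C W X Y f h) = h"
  by (metis assoc id_l)
lemma cancel_zero[simp]: "Cmp C X Y Z g f = Zero C X Z \<Longrightarrow> W \<in> Ob C \<Longrightarrow> X \<in> Ob C \<Longrightarrow> Y \<in> Ob C \<Longrightarrow> Z \<in> Ob C \<Longrightarrow>
  f \<in> Hom C X Y \<Longrightarrow> g \<in> Hom C Y Z \<Longrightarrow> h \<in> Hom C W X \<Longrightarrow> Cmp C W Y Z g (Cmp C W X Y f h) = Zero C W Z"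
  by (metis assoc cmp_zero_l)

lemma pi_faithful: assumes "X \<in> Ob C" "Y \<in> Ob C" "f \<in> Hom C X Y" "g \<in> Hom C X Y"
  and "PiA C X Y f = PiA C X Y g" shows "f = g"
proof -
  have "f = Cmp C X (PiO C (PiO C X)) Y (Cmp C (PiO C (PiO C X)) X Y f (Xi C X)) (xinv X)"
    using assms by simp
  also have "\<dots> = Cmp C X (PiO C (PiO C X)) Y (Cmp C (PiO C (PiO C X)) X Y g (Xi C X)) (xinv X)"
    using assms by (simp only: xi_nat)
  also have "\<dots> = g" using assms by simp
  finally show ?thesis .
qed

lemma pi_full: assumes "X \<in> Ob C" "Y \<in> Ob C" "g \<in> Hom C (PiO C X) (PiO C Y)"
  shows "\<exists>h\<in>Hom C X Y. PiA C X Y h = g"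
proof
  let ?X2 = "PiO C (PiO C X)" and ?Y2 = "PiO C (PiO C Y)"
  let ?h = "Cmp C X ?Y2 Y (Xi C Y) (Cmp C X ?X2 ?Y2 (PiA C (PiO C X) (PiO C Y) g) (xinv X))"
  show "?h \<in> Hom C X Y" using assms by simp
  have a: "Cmp C (PiO C X) (PiO C ?X2) (PiO C X) (Xi C (PiO C X)) (PiA C X ?X2 (xinv X)) = Id C (PiO C X)"
    using assms by (metis pi_id pi_cmp xi_pi xinv_r xinv_hom xi_hom pi_ob)
  have "PiA C X Y ?h = Cmp C (PiO C X) (PiO C ?Y2) (PiO C Y) (Xi C (PiO C Y))
      (Cmp C (PiO C X) (PiO C ?X2) (PiO C ?Y2) (PiA C ?X2 ?Y2 (PiA C (PiO C X) (PiO C Y) g)) (PiA C X ?X2 (xinv X)))"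
    using assms by simp
  also have "\<dots> = Cmp C (PiO C X) (PiO C ?X2) (PiO C Y) (Cmp C (PiO C ?X2) (PiO C ?Y2) (PiO C Y) (Xi C (PiO C Y))
      (PiA C ?X2 ?Y2 (PiA C (PiO C X) (PiO C Y) g))) (PiA C X ?X2 (xinv X))"
    using assms by simp
  also have "\<dots> = Cmp C (PiO C X) (PiO C ?X2) (PiO C Y) (Cmp C (PiO C ?X2) (PiO C X) (PiO C Y) g (Xi C (PiO C X))) (PiA C X ?X2 (xinv X))"
    using assms by (simp only: xi_nat pi_ob)
  also have "\<dots> = Cmp C (PiO C X) (PiO C X) (PiO C Y) g (Cmp C (PiO C X) (PiO C ?X2) (PiO C X) (Xi C (PiO C X)) (PiA C X ?X2 (xinv X)))"
    using assms by simp
  also have "\<dots> = g" using assms a by simp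
  finally show "PiA C X Y ?h = g" .
qed

lemma pi_zero[simp]: assumes "X \<in> Ob C" "Y \<in> Ob C" shows "PiA C X Y (Zero C X Y) = Zero C (PiO C X) (PiO C Y)"
proof -
  obtain h where h: "h \<in> Hom C X Y" "PiA C X Y h = Zero C (PiO C X) (PiO C Y)"
    using pi_full[OF assms zero_hom] assms by auto
  have "PiA C X Y (Zero C X Y) = PiA C X Y (Cmp C X X Y h (Zero C X X))" using assms h by simp
  also have "\<dots> = Cmp C (PiO C X) (PiO C X) (PiO C Y) (PiA C X Y h) (PiA C X X (Zero C X X))"
    using assms h by (simp del: cmp_zero_r)
  also have "\<dots> = Zero C (PiO C X) (PiO C Y)" using h assms by simp
  finally show ?thesis .
qed

lemma pi_id_pair[simp]: "Cmp C X Y X g f = Id C X \<Longrightarrow> X \<in> Ob C \<Longrightarrow> Y \<in> Ob C \<Longrightarrow>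
  f \<in> Hom C X Y \<Longrightarrow> g \<in> Hom C Y X \<Longrightarrow> Cmp C (PiO C X) (PiO C Y) (PiO C X) (PiA C Y X g) (PiA C X Y f) = Id C (PiO C X)"
  by (metis pi_cmp pi_id)
lemma pi_zero_pair[simp]: "Cmp C X Y Z g f = Zero C X Z \<Longrightarrow> X \<in> Ob C \<Longrightarrow> Y \<in> Ob C \<Longrightarrow> Z \<in> Ob C \<Longrightarrow>
  f \<in> Hom C X Y \<Longrightarrow> g \<in> Hom C Y Z \<Longrightarrow> Cmp C (PiO C X) (PiO C Y) (PiO C Z) (PiA C Y Z g) (PiA C X Y f) = Zero C (PiO C X) (PiO C Z)"
  by (metis pi_cmp pi_zero)

definition bip where "bip S A B p1 p2 i1 i2 \<longleftrightarrow> S \<in> Ob C \<and> p1 \<in> Hom C S A \<and> p2 \<in> Hom C S B \<and>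
  i1 \<in> Hom C A S \<and> i2 \<in> Hom C B S \<and>
  Cmp C A S A p1 i1 = Id C A \<and> Cmp C B S B p2 i2 = Id C B \<and>
  Cmp C B S A p1 i2 = Zero C B A \<and> Cmp C A S B p2 i1 = Zero C A B \<and>
  Add C S S (Cmp C S A S i1 p1) (Cmp C S B S i2 p2) = Id C S"

lemma bip_ext: assumes "bip S A B p1 p2 i1 i2" "A \<in> Ob C" "B \<in> Ob C" "T \<in> Ob C" "u \<in> Hom C S T" "v \<in> Hom C S T"
  "Cmp C A S T u i1 = Cmp C A S T v i1" "Cmp C B S T u i2 = Cmp C B S T v i2" shows "u = v"
proof -
  have S: "S \<in> Ob C" "p1 \<in> Hom C S A" "p2 \<in> Hom C S B" "i1 \<in> Hom C A S" "i2 \<in> Hom C B S"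
    and e: "Add C S S (Cmp C S A S i1 p1) (Cmp C S B S i2 p2) = Id C S" using assms(1) unfolding bip_def by auto
  have "u = Cmp C S S T u (Add C S S (Cmp C S A S i1 p1) (Cmp C S B S i2 p2))" using e S assms by simp
  also have "\<dots> = Add C S T (Cmp C S A T (Cmp C A S T u i1) p1) (Cmp C S B T (Cmp C B S T u i2) p2)" using S assms(2-6) by simp
  also have "\<dots> = Add C S T (Cmp C S A T (Cmp C A S T v i1) p1) (Cmp C S B T (Cmp C B S T v i2) p2)" using assms by simp
  also have "\<dots> = Cmp C S S T v (Add C S S (Cmp C S A S i1 p1) (Cmp C S B S i2 p2))" using S assms(2-6) by simp
  also have "\<dots> = v" using e S assms by simp
  finally show ?thesis .
qed

lemma bip_ext_out: assumes "bip S A B p1 p2 i1 i2" "A \<in> Ob C" "B \<in> Ob C" "T \<in> Ob C" "u \<in> Hom C T S" "v \<in> Hom C T S"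
  "Cmp C T S A p1 u = Cmp C T S A p1 v" "Cmp C T S B p2 u = Cmp C T S B p2 v" shows "u = v"
proof -
  have S: "S \<in> Ob C" "p1 \<in> Hom C S A" "p2 \<in> Hom C S B" "i1 \<in> Hom C A S" "i2 \<in> Hom C B S"
    and e: "Add C S S (Cmp C S A S i1 p1) (Cmp C S B S i2 p2) = Id C S" using assms(1) unfolding bip_def by auto
  have "u = Cmp C T S S (Add C S S (Cmp C S A S i1 p1) (Cmp C S B S i2 p2)) u" using e S assms by simp
  also have "\<dots> = Add C T S (Cmp C T A S i1 (Cmp C T S A p1 u)) (Cmp C T B S i2 (Cmp C T S B p2 u))" using S assms(2-6) by simp
  also have "\<dots> = Add C T S (Cmp C T A S i1 (Cmp C T S A p1 v)) (Cmp C T B S i2 (Cmp C T S B p2 v))" using assms by simp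
  also have "\<dots> = Cmp C T S S (Add C S S (Cmp C S A S i1 p1) (Cmp C S B S i2 p2)) v" using S assms(2-6) by simp
  also have "\<dots> = v" using e S assms by simp
  finally show ?thesis .
qed

lemma bip_exists: "A \<in> Ob C \<Longrightarrow> B \<in> Ob C \<Longrightarrow> \<exists>S p1 p2 i1 i2. bip S A B p1 p2 i1 i2"
  using addC unfolding additive_def bip_def by metis

definition bsel where "bsel A B = (SOME (S, p1, p2, i1, i2). bip S A B p1 p2 i1 i2)"
definition "bS A B = fst (bsel A B)"
definition "bp1 A B = fst (snd (bsel A B))"
definition "bp2 A B = fst (snd (snd (bsel A B)))"
definition "bi1 A B = fst (snd (snd (snd (bsel A B))))"
definition "bi2 A B = snd (snd (snd (snd (bsel A B))))"

lemma bsel: "A \<in> Ob C \<Longrightarrow> B \<in> Ob C \<Longrightarrow> bip (bS A B) A B (bp1 A B) (bp2 A B) (bi1 A B) (bi2 A B)"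
proof -
  assume "A \<in> Ob C" "B \<in> Ob C"
  then obtain S p1 p2 i1 i2 where "bip S A B p1 p2 i1 i2" using bip_exists by blast
  hence "(\<lambda>(S, p1, p2, i1, i2). bip S A B p1 p2 i1 i2) (bsel A B)"
    unfolding bsel_def by (rule someI[where x="(S,p1,p2,i1,i2)", where P="\<lambda>(S, p1, p2, i1, i2). bip S A B p1 p2 i1 i2", simplified])
  thus ?thesis unfolding bS_def bp1_def bp2_def bi1_def bi2_def by (auto split: prod.splits)
qed

lemma bS_ob[simp]: "A \<in> Ob C \<Longrightarrow> B \<in> Ob C \<Longrightarrow> bS A B \<in> Ob C" using bsel unfolding bip_def by blast
lemma bp1_hom[simp]: "A \<in> Ob C \<Longrightarrow> B \<in> Ob C \<Longrightarrow> bp1 A B \<in> Hom C (bS A B) A" using bsel unfolding bip_def by blast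
lemma bp2_hom[simp]: "A \<in> Ob C \<Longrightarrow> B \<in> Ob C \<Longrightarrow> bp2 A B \<in> Hom C (bS A B) B" using bsel unfolding bip_def by blast
lemma bi1_hom[simp]: "A \<in> Ob C \<Longrightarrow> B \<in> Ob C \<Longrightarrow> bi1 A B \<in> Hom C A (bS A B)" using bsel unfolding bip_def by blast
lemma bi2_hom[simp]: "A \<in> Ob C \<Longrightarrow> B \<in> Ob C \<Longrightarrow> bi2 A B \<in> Hom C B (bS A B)" using bsel unfolding bip_def by blast
lemma b11[simp]: "A \<in> Ob C \<Longrightarrow> B \<in> Ob C \<Longrightarrow> Cmp C A (bS A B) A (bp1 A B) (bi1 A B) = Id C A" using bsel unfolding bip_def by blast
lemma b22[simp]: "A \<in> Ob C \<Longrightarrow> B \<in> Ob C \<Longrightarrow> Cmp C B (bS A B) B (bp2 A B) (bi2 A B) = Id C B" using bsel unfolding bip_def by blast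
lemma b12[simp]: "A \<in> Ob C \<Longrightarrow> B \<in> Ob C \<Longrightarrow> Cmp C B (bS A B) A (bp1 A B) (bi2 A B) = Zero C B A" using bsel unfolding bip_def by blast
lemma b21[simp]: "A \<in> Ob C \<Longrightarrow> B \<in> Ob C \<Longrightarrow> Cmp C A (bS A B) B (bp2 A B) (bi1 A B) = Zero C A B" using bsel unfolding bip_def by blast

lemma pi_bip: assumes b: "bip S A B p1 p2 i1 i2" and AB: "A \<in> Ob C" "B \<in> Ob C"
  shows "bip (PiO C S) (PiO C A) (PiO C B) (PiA C S A p1) (PiA C S B p2) (PiA C A S i1) (PiA C B S i2)"
proof -
  have S: "S \<in> Ob C" "p1 \<in> Hom C S A" "p2 \<in> Hom C S B" "i1 \<in> Hom C A S" "i2 \<in> Hom C B S"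
    and r: "Cmp C A S A p1 i1 = Id C A" "Cmp C B S B p2 i2 = Id C B"
  "Cmp C B S A p1 i2 = Zero C B A" "Cmp C A S B p2 i1 = Zero C A B"
    and e: "Add C S S (Cmp C S A S i1 p1) (Cmp C S B S i2 p2) = Id C S" using b unfolding bip_def by auto
  let ?E = "Add C (PiO C S) (PiO C S) (Cmp C (PiO C S) (PiO C A) (PiO C S) (PiA C A S i1) (PiA C S A p1))
     (Cmp C (PiO C S) (PiO C B) (PiO C S) (PiA C B S i2) (PiA C S B p2))"
  have Eh: "?E \<in> Hom C (PiO C S) (PiO C S)" using S AB by simp
  obtain e' where e': "e' \<in> Hom C S S" "PiA C S S e' = ?E" using pi_full[OF S(1) S(1) Eh] by blast
  have "PiA C S A (Cmp C S S A p1 e') = PiA C S A p1" using e' S AB r by simp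
  hence 1: "Cmp C S S A p1 e' = p1" using pi_faithful S AB e' by (meson cmp_hom)
  have "PiA C S B (Cmp C S S B p2 e') = PiA C S B p2" using e' S AB r by simp
  hence 2: "Cmp C S S B p2 e' = p2" using pi_faithful S AB e' by (meson cmp_hom)
  have "e' = Cmp C S S S (Add C S S (Cmp C S A S i1 p1) (Cmp C S B S i2 p2)) e'" using e e' S by simp
  also have "\<dots> = Add C S S (Cmp C S A S i1 (Cmp C S S A p1 e')) (Cmp C S B S i2 (Cmp C S S B p2 e'))" using e' S AB by simp
  also have "\<dots> = Id C S" using 1 2 e by simp
  finally have "?E = Id C (PiO C S)" using e' S by simp
  thus ?thesis using S AB r unfolding bip_def by simp
qed

lemma bipI: "bip S A B p1 p2 i1 i2 \<Longrightarrow> S \<in> Ob C \<and> p1 \<in> Hom C S A \<and> p2 \<in> Hom C S B \<and>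
  i1 \<in> Hom C A S \<and> i2 \<in> Hom C B S" unfolding bip_def by blast

lemma pi_add[simp]: assumes X: "X \<in> Ob C" "Y \<in> Ob C" and f: "f \<in> Hom C X Y" "g \<in> Hom C X Y"
  shows "PiA C X Y (Add C X Y f g) = Add C (PiO C X) (PiO C Y) (PiA C X Y f) (PiA C X Y g)"
proof -
  define S p1 p2 i1 i2 where "S = bS X X" "p1 = bp1 X X" "p2 = bp2 X X" "i1 = bi1 X X" "i2 = bi2 X X"
  have b: "bip S X X p1 p2 i1 i2" unfolding S_p1_p2_i1_i2_def using bsel X by simp
  have S: "S \<in> Ob C" "p1 \<in> Hom C S X" "p2 \<in> Hom C S X" "i1 \<in> Hom C X S" "i2 \<in> Hom C X S"
    and r: "Cmp C X S X p1 i1 = Id C X" "Cmp C X S X p2 i2 = Id C X"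
  "Cmp C X S X p1 i2 = Zero C X X" "Cmp C X S X p2 i1 = Zero C X X"
    and e: "Add C S S (Cmp C S X S i1 p1) (Cmp C S X S i2 p2) = Id C S" using b unfolding bip_def by auto
  have pb: "bip (PiO C S) (PiO C X) (PiO C X) (PiA C S X p1) (PiA C S X p2) (PiA C X S i1) (PiA C X S i2)"
    using pi_bip[OF b X(1) X(1)] .
  let ?d = "Add C X S i1 i2" and ?m = "Add C S Y (Cmp C S X Y f p1) (Cmp C S X Y g p2)"
  have dh: "?d \<in> Hom C X S" and mh: "?m \<in> Hom C S Y" using S X f by auto
  have md: "Cmp C X S Y ?m ?d = Add C X Y f g" using S r X f by simp
  have Pm: "PiA C S Y ?m = Add C (PiO C S) (PiO C Y) (Cmp C (PiO C S) (PiO C X) (PiO C Y) (PiA C X Y f) (PiA C S X p1))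
      (Cmp C (PiO C S) (PiO C X) (PiO C Y) (PiA C X Y g) (PiA C S X p2))"
    by (rule bip_ext[OF pb, where T="PiO C Y"]) (use S r X f mh in \<open>simp_all del: pi_cmp add: pi_cmp[symmetric]\<close>)
  have Pd: "PiA C X S ?d = Add C (PiO C X) (PiO C S) (PiA C X S i1) (PiA C X S i2)"
    by (rule bip_ext_out[OF pb, where T="PiO C X"]) (use S r X f dh in \<open>simp_all del: pi_cmp add: pi_cmp[symmetric]\<close>)
  have "PiA C X Y (Add C X Y f g) = PiA C X Y (Cmp C X S Y ?m ?d)" by (simp only: md)
  also have "\<dots> = Cmp C (PiO C X) (PiO C S) (PiO C Y) (PiA C S Y ?m) (PiA C X S ?d)"
    using S X dh mh by (rule_tac pi_cmp) auto
  also have "\<dots> = Add C (PiO C X) (PiO C Y) (PiA C X Y f) (PiA C X Y g)"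
    unfolding Pm Pd using S r X f by simp
  finally show ?thesis .
qed

lemma pi_neg[simp]: assumes X: "X \<in> Ob C" "Y \<in> Ob C" and f: "f \<in> Hom C X Y"
  shows "PiA C X Y (Smul C X Y (-1) f) = Smul C (PiO C X) (PiO C Y) (-1) (PiA C X Y f)"
proof -
  have "Add C (PiO C X) (PiO C Y) (PiA C X Y f) (PiA C X Y (Smul C X Y (-1) f)) = Zero C (PiO C X) (PiO C Y)"
    using X f by (simp flip: pi_add)
  thus ?thesis using neg_unique X f by simp
qed

end



locale CAT =
  fixes D :: "('o, 'm, 'k, 'z) lcat_scheme"
  assumes cat: "category D"
begin
lemma id_hom[simp]: "X \<in> Ob D \<Longrightarrow> Id D X \<in> Hom D X X"
  using cat unfolding category_def by blast
lemma cmp_hom[simp]: "X \<in> Ob D \<Longrightarrow> Y \<in> Ob D \<Longrightarrow> Z \<in> Ob D \<Longrightarrow> f \<in> Hom D X Y \<Longrightarrow> g \<in> Hom D Y Z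
   \<Longrightarrow> Cmp D X Y Z g f \<in> Hom D X Z"
  using cat unfolding category_def by blast
lemma id_l[simp]: "X \<in> Ob D \<Longrightarrow> Y \<in> Ob D \<Longrightarrow> f \<in> Hom D X Y \<Longrightarrow> Cmp D X Y Y (Id D Y) f = f"
  using cat unfolding category_def by blast
lemma id_r[simp]: "X \<in> Ob D \<Longrightarrow> Y \<in> Ob D \<Longrightarrow> f \<in> Hom D X Y \<Longrightarrow> Cmp D X X Y f (Id D X) = f"
  using cat unfolding category_def by blast
lemma assoc[simp]: "W \<in> Ob D \<Longrightarrow> X \<in> Ob D \<Longrightarrow> Y \<in> Ob D \<Longrightarrow> Z \<in> Ob D \<Longrightarrow>
   f \<in> Hom D W X \<Longrightarrow> g \<in> Hom D X Y \<Longrightarrow> h \<in> Hom D Y Z \<Longrightarrow>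
   Cmp D W X Z (Cmp D X Y Z h g) f = Cmp D W Y Z h (Cmp D W X Y g f)"
  by (rule cat[unfolded category_def, THEN conjunct2, THEN conjunct2, THEN conjunct2, rule_format, symmetric])
lemma cancel_id[simp]: "Cmp D X Y X g f = Id D X \<Longrightarrow> W \<in> Ob D \<Longrightarrow> X \<in> Ob D \<Longrightarrow> Y \<in> Ob D \<Longrightarrow>
  f \<in> Hom D X Y \<Longrightarrow> g \<in> Hom D Y X \<Longrightarrow> h \<in> Hom D W X \<Longrightarrow> Cmp D W Y X g (Cmp D W X Y f h) = h"
  by (metis assoc id_l)
end

lemma ff_es_equiv:
  assumes cC: "category C" and cD: "category D"
   and F: "functor_on C D FO FA"
   and faith: "\<And>X Y f g. X \<in> Ob C \<Longrightarrow> Y \<in> Ob C \<Longrightarrow> f \<in> Hom C X Y \<Longrightarrow> g \<in> Hom C X Y \<Longrightarrow> FA X Y f = FA X Y g \<Longrightarrow> f = g"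
   and full: "\<And>X Y g. X \<in> Ob C \<Longrightarrow> Y \<in> Ob C \<Longrightarrow> g \<in> Hom D (FO X) (FO Y) \<Longrightarrow> \<exists>f\<in>Hom C X Y. FA X Y f = g"
   and es: "\<And>A. A \<in> Ob D \<Longrightarrow> \<exists>X\<in>Ob C. \<exists>u. iso D (FO X) A u"
  shows "equivalence C D FO FA"
proof -
  interpret Cc: CAT C by (rule CAT.intro, rule cC)
  interpret Dd: CAT D by (rule CAT.intro, rule cD)
  have Fo[simp]: "X \<in> Ob C \<Longrightarrow> FO X \<in> Ob D" for X using F unfolding functor_on_def by blast
  have Fh[simp]: "X \<in> Ob C \<Longrightarrow> Y \<in> Ob C \<Longrightarrow> f \<in> Hom C X Y \<Longrightarrow> FA X Y f \<in> Hom D (FO X) (FO Y)" for X Y f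
    using F unfolding functor_on_def by blast
  have Fi[simp]: "X \<in> Ob C \<Longrightarrow> FA X X (Id C X) = Id D (FO X)" for X using F unfolding functor_on_def by blast
  have Fc[simp]: "X \<in> Ob C \<Longrightarrow> Y \<in> Ob C \<Longrightarrow> Z \<in> Ob C \<Longrightarrow> f \<in> Hom C X Y \<Longrightarrow> g \<in> Hom C Y Z \<Longrightarrow>
     FA X Z (Cmp C X Y Z g f) = Cmp D (FO X) (FO Y) (FO Z) (FA Y Z g) (FA X Y f)" for X Y Z f g
    using F unfolding functor_on_def by blast
  define GO where "GO A = (SOME X. X \<in> Ob C \<and> (\<exists>u. iso D (FO X) A u))" for A
  define e where "e A = (SOME u. iso D (FO (GO A)) A u)" for A
  define ei where "ei A = (SOME g. g \<in> Hom D A (FO (GO A)) \<and> Cmp D (FO (GO A)) A (FO (GO A)) g (e A) = Id D (FO (GO A))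
     \<and> Cmp D A (FO (GO A)) A (e A) g = Id D A)" for A
  have GO: "A \<in> Ob D \<Longrightarrow> GO A \<in> Ob C \<and> (\<exists>u. iso D (FO (GO A)) A u)" for A
    unfolding GO_def by (rule someI_ex) (use es in blast)
  have GOo[simp]: "A \<in> Ob D \<Longrightarrow> GO A \<in> Ob C" for A using GO by blast
  have eiso: "A \<in> Ob D \<Longrightarrow> iso D (FO (GO A)) A (e A)" for A unfolding e_def by (rule someI_ex) (use GO in blast)
  have ei: "A \<in> Ob D \<Longrightarrow> ei A \<in> Hom D A (FO (GO A)) \<and> Cmp D (FO (GO A)) A (FO (GO A)) (ei A) (e A) = Id D (FO (GO A))
     \<and> Cmp D A (FO (GO A)) A (e A) (ei A) = Id D A" for A
    unfolding ei_def by (rule someI_ex) (use eiso[unfolded iso_def] in blast)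
  have eh[simp]: "A \<in> Ob D \<Longrightarrow> e A \<in> Hom D (FO (GO A)) A" for A using eiso unfolding iso_def by blast
  have eih[simp]: "A \<in> Ob D \<Longrightarrow> ei A \<in> Hom D A (FO (GO A))" for A using ei by blast
  have ei1[simp]: "A \<in> Ob D \<Longrightarrow> Cmp D (FO (GO A)) A (FO (GO A)) (ei A) (e A) = Id D (FO (GO A))" for A using ei by blast
  have ei2[simp]: "A \<in> Ob D \<Longrightarrow> Cmp D A (FO (GO A)) A (e A) (ei A) = Id D A" for A using ei by blast
  define GA where "GA A B g = (SOME f. f \<in> Hom C (GO A) (GO B) \<and>
     FA (GO A) (GO B) f = Cmp D (FO (GO A)) B (FO (GO B)) (ei B) (Cmp D (FO (GO A)) A B g (e A)))" for A B g
  have GA: "A \<in> Ob D \<Longrightarrow> B \<in> Ob D \<Longrightarrow> g \<in> Hom D A B \<Longrightarrow> GA A B g \<in> Hom C (GO A) (GO B) \<and>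
     FA (GO A) (GO B) (GA A B g) = Cmp D (FO (GO A)) B (FO (GO B)) (ei B) (Cmp D (FO (GO A)) A B g (e A))" for A B g
  proof -
    assume a: "A \<in> Ob D" "B \<in> Ob D" "g \<in> Hom D A B"
    have "Cmp D (FO (GO A)) B (FO (GO B)) (ei B) (Cmp D (FO (GO A)) A B g (e A)) \<in> Hom D (FO (GO A)) (FO (GO B))"
      using a by simp
    then obtain f where "f \<in> Hom C (GO A) (GO B)" "FA (GO A) (GO B) f = Cmp D (FO (GO A)) B (FO (GO B)) (ei B) (Cmp D (FO (GO A)) A B g (e A))"
      using full[of "GO A" "GO B"] a by force
    thus ?thesis unfolding GA_def by (rule_tac someI2[where a=f]) auto
  qed
  have GAh[simp]: "A \<in> Ob D \<Longrightarrow> B \<in> Ob D \<Longrightarrow> g \<in> Hom D A B \<Longrightarrow> GA A B g \<in> Hom C (GO A) (GO B)" for A B g using GA by blast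
  have GAF[simp]: "A \<in> Ob D \<Longrightarrow> B \<in> Ob D \<Longrightarrow> g \<in> Hom D A B \<Longrightarrow>
     FA (GO A) (GO B) (GA A B g) = Cmp D (FO (GO A)) B (FO (GO B)) (ei B) (Cmp D (FO (GO A)) A B g (e A))" for A B g using GA by blast
  define eta where "eta X = (SOME f. f \<in> Hom C (GO (FO X)) X \<and> FA (GO (FO X)) X f = e (FO X))" for X
  have eta: "X \<in> Ob C \<Longrightarrow> eta X \<in> Hom C (GO (FO X)) X \<and> FA (GO (FO X)) X (eta X) = e (FO X)" for X
    unfolding eta_def by (rule someI_ex) (use full[of "GO (FO X)" X] eh[of "FO X"] in force)
  have etah[simp]: "X \<in> Ob C \<Longrightarrow> eta X \<in> Hom C (GO (FO X)) X" for X using eta by blast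
  have etaF[simp]: "X \<in> Ob C \<Longrightarrow> FA (GO (FO X)) X (eta X) = e (FO X)" for X using eta by blast
  define etai where "etai X = (SOME f. f \<in> Hom C X (GO (FO X)) \<and> FA X (GO (FO X)) f = ei (FO X))" for X
  have etai: "X \<in> Ob C \<Longrightarrow> etai X \<in> Hom C X (GO (FO X)) \<and> FA X (GO (FO X)) (etai X) = ei (FO X)" for X
    unfolding etai_def by (rule someI_ex) (use full[of X "GO (FO X)"] eih[of "FO X"] in force)
  have etaih[simp]: "X \<in> Ob C \<Longrightarrow> etai X \<in> Hom C X (GO (FO X))" for X using etai by blast
  have etaiF[simp]: "X \<in> Ob C \<Longrightarrow> FA X (GO (FO X)) (etai X) = ei (FO X)" for X using etai by blast

  have func: "functor_on D C GO GA"
    unfolding functor_on_def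
  proof (intro conjI ballI)
    fix A assume A: "A \<in> Ob D"
    show "GO A \<in> Ob C" using A by simp
    show "GA A A (Id D A) = Id C (GO A)"
      by (rule faith[of "GO A" "GO A"]) (use A in simp_all)
  next
    fix A B g assume "A \<in> Ob D" "B \<in> Ob D" "g \<in> Hom D A B"
    thus "GA A B g \<in> Hom C (GO A) (GO B)" by simp
  next
    fix A B E f g assume a: "A \<in> Ob D" "B \<in> Ob D" "E \<in> Ob D" "f \<in> Hom D A B" "g \<in> Hom D B E"
    show "GA A E (Cmp D A B E g f) = Cmp C (GO A) (GO B) (GO E) (GA B E g) (GA A B f)"
      by (rule faith[of "GO A" "GO E"]) (use a in simp_all)
  qed
  have n1: "nat_iso C C (\<lambda>X. GO (FO X)) (\<lambda>X Y f. GA (FO X) (FO Y) (FA X Y f)) (\<lambda>X. X) (\<lambda>X Y f. f) eta"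
    unfolding nat_iso_def iso_def
  proof (intro conjI ballI bexI)
    fix X assume X: "X \<in> Ob C"
    show "eta X \<in> Hom C (GO (FO X)) X" using X by simp
    show "etai X \<in> Hom C X (GO (FO X))" using X by simp
    show "Cmp C (GO (FO X)) X (GO (FO X)) (etai X) (eta X) = Id C (GO (FO X))"
      by (rule faith[of "GO (FO X)" "GO (FO X)"]) (use X in simp_all)
    show "Cmp C X (GO (FO X)) X (eta X) (etai X) = Id C X"
      by (rule faith[of X X]) (use X in simp_all)
  next
    fix X Y f assume a: "X \<in> Ob C" "Y \<in> Ob C" "f \<in> Hom C X Y"
    show "Cmp C (GO (FO X)) X Y f (eta X) =
          Cmp C (GO (FO X)) (GO (FO Y)) Y (eta Y) (GA (FO X) (FO Y) (FA X Y f))"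
      by (rule faith[of "GO (FO X)" Y]) (use a in simp_all)
  qed
  have n2: "nat_iso D D (\<lambda>X. FO (GO X)) (\<lambda>X Y f. FA (GO X) (GO Y) (GA X Y f)) (\<lambda>X. X) (\<lambda>X Y f. f) e"
    unfolding nat_iso_def
  proof (intro conjI ballI)
    fix A assume "A \<in> Ob D" thus "iso D (FO (GO A)) A (e A)" by (rule eiso)
  next
    fix A B g assume a: "A \<in> Ob D" "B \<in> Ob D" "g \<in> Hom D A B"
    show "Cmp D (FO (GO A)) A B g (e A) = Cmp D (FO (GO A)) (FO (GO B)) B (e B) (FA (GO A) (GO B) (GA A B g))"
      using a by simp
  qed
  show ?thesis unfolding equivalence_def using F func n1 n2 by blast
qed




context SC
begin

abbreviation "Po \<equiv> PiO C"
abbreviation "Pa \<equiv> PiA C"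

lemma ct_Ob: "(X, \<phi>) \<in> Ob (ct C) \<longleftrightarrow> X \<in> Ob C \<and> iso C (Po X) X \<phi> \<and>
   Cmp C (Po (Po X)) (Po X) X \<phi> (Pa (Po X) X \<phi>) = Xi C X" unfolding ct_def by simp
lemma ct_Hom: "Hom (ct C) (X, \<phi>) (X', \<phi>') = {f \<in> Hom C X X'.
   Cmp C (Po X) X X' f \<phi> = Cmp C (Po X) (Po X') X' \<phi>' (Pa X X' f)}" unfolding ct_def by simp
lemma ct_Cmp[simp]: "Cmp (ct C) A B E g f = Cmp C (fst A) (fst B) (fst E) g f" unfolding ct_def by simp
lemma ct_Id[simp]: "Id (ct C) A = Id C (fst A)" unfolding ct_def by simp
lemma ct_PiO[simp]: "PiO (ct C) (X, \<phi>) = (X, Smul C (Po X) X (-1) \<phi>)" unfolding ct_def by simp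
lemma ct_PiA[simp]: "PiA (ct C) A B f = f" unfolding ct_def by simp
lemma ct_Xi[simp]: "Xi (ct C) A = Id C (fst A)" unfolding ct_def by simp
lemma ct_Smul[simp]: "Smul (ct C) A B a f = Smul C (fst A) (fst B) a f" unfolding ct_def by simp

lemma ctct_Ob: "((X, \<phi>), \<psi>) \<in> Ob (ct (ct C)) \<longleftrightarrow> (X \<in> Ob C \<and> iso C (Po X) X \<phi> \<and>
   Cmp C (Po (Po X)) (Po X) X \<phi> (Pa (Po X) X \<phi>) = Xi C X) \<and>
   iso (ct C) (X, Smul C (Po X) X (-1) \<phi>) (X, \<phi>) \<psi> \<and> Cmp C X X X \<psi> \<psi> = Id C X"
  apply (subst ct_def[of "ct C"]) by (simp add: ct_Ob)
lemma ctct_Hom: "f \<in> Hom (ct (ct C)) ((X, \<phi>), \<psi>) ((X', \<phi>'), \<psi>') \<longleftrightarrow>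
   f \<in> Hom C X X' \<and> Cmp C (Po X) X X' f \<phi> = Cmp C (Po X) (Po X') X' \<phi>' (Pa X X' f) \<and>
   Cmp C X X X' f \<psi> = Cmp C X X' X' \<psi>' f"
  apply (subst ct_def[of "ct C"]) by (simp add: ct_Hom)
lemma ctct_Cmp[simp]: "Cmp (ct (ct C)) A B E g f = Cmp C (fst (fst A)) (fst (fst B)) (fst (fst E)) g f"
  by (simp add: ct_def[of "ct C"])
lemma ctct_Id[simp]: "Id (ct (ct C)) A = Id C (fst (fst A))" by (simp add: ct_def[of "ct C"])
lemma ctct_PiO[simp]: "PiO (ct (ct C)) ((X, \<phi>), \<psi>) = ((X, \<phi>), Smul C X X (-1) \<psi>)" by (simp add: ct_def[of "ct C"])
lemma ctct_PiA[simp]: "PiA (ct (ct C)) A B f = f" by (simp add: ct_def[of "ct C"])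
lemma ctct_Xi[simp]: "Xi (ct (ct C)) A = Id C (fst (fst A))" by (simp add: ct_def[of "ct C"])

lemma ext4: assumes b1: "bip S A B p1 p2 i1 i2" and b2: "bip T A' B' q1 q2 j1 j2"
  and ob: "A \<in> Ob C" "B \<in> Ob C" "A' \<in> Ob C" "B' \<in> Ob C" and uv: "u \<in> Hom C S T" "v \<in> Hom C S T"
  and e11: "Cmp C A T A' q1 (Cmp C A S T u i1) = Cmp C A T A' q1 (Cmp C A S T v i1)"
  and e21: "Cmp C A T B' q2 (Cmp C A S T u i1) = Cmp C A T B' q2 (Cmp C A S T v i1)"
  and e12: "Cmp C B T A' q1 (Cmp C B S T u i2) = Cmp C B T A' q1 (Cmp C B S T v i2)"
  and e22: "Cmp C B T B' q2 (Cmp C B S T u i2) = Cmp C B T B' q2 (Cmp C B S T v i2)"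
  shows "u = v"
proof -
  have S: "S \<in> Ob C" "i1 \<in> Hom C A S" "i2 \<in> Hom C B S" and T: "T \<in> Ob C"
    using b1 b2 unfolding bip_def by auto
  show ?thesis
  proof (rule bip_ext[OF b1 ob(1,2) T uv])
    show "Cmp C A S T u i1 = Cmp C A S T v i1"
      by (rule bip_ext_out[OF b2 ob(3,4) ob(1)]) (use S T uv ob e11 e21 in simp_all)
    show "Cmp C B S T u i2 = Cmp C B S T v i2"
      by (rule bip_ext_out[OF b2 ob(3,4) ob(2)]) (use S T uv ob e12 e22 in simp_all)
  qed
qed

lemma xi_nat_h: "X \<in> Ob C \<Longrightarrow> Y \<in> Ob C \<Longrightarrow> W \<in> Ob C \<Longrightarrow> f \<in> Hom C X Y \<Longrightarrow> h \<in> Hom C W (Po (Po X)) \<Longrightarrow>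
  Cmp C W X Y f (Cmp C W (Po (Po X)) X (Xi C X) h) =
  Cmp C W (Po (Po Y)) Y (Xi C Y) (Cmp C W (Po (Po X)) (Po (Po Y)) (Pa (Po X) (Po Y) (Pa X Y f)) h)"
  by (metis assoc xi_nat pi_ob pi_hom xi_hom)

definition "S X = bS X (Po X)"
definition "P1 X = bp1 X (Po X)"
definition "P2 X = bp2 X (Po X)"
definition "I1 X = bi1 X (Po X)"
definition "I2 X = bi2 X (Po X)"

lemma bipS: "X \<in> Ob C \<Longrightarrow> bip (S X) X (Po X) (P1 X) (P2 X) (I1 X) (I2 X)"
  unfolding S_def P1_def P2_def I1_def I2_def by (simp add: bsel)
lemma bipPS: "X \<in> Ob C \<Longrightarrow> bip (Po (S X)) (Po X) (Po (Po X)) (Pa (S X) X (P1 X)) (Pa (S X) (Po X) (P2 X)) (Pa X (S X) (I1 X)) (Pa (Po X) (S X) (I2 X))"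
  by (rule pi_bip[OF bipS]) simp_all
lemma bipPPS: "X \<in> Ob C \<Longrightarrow> bip (Po (Po (S X))) (Po (Po X)) (Po (Po (Po X)))
   (Pa (Po (S X)) (Po X) (Pa (S X) X (P1 X))) (Pa (Po (S X)) (Po (Po X)) (Pa (S X) (Po X) (P2 X)))
   (Pa (Po X) (Po (S X)) (Pa X (S X) (I1 X))) (Pa (Po (Po X)) (Po (S X)) (Pa (Po X) (S X) (I2 X)))"
  by (rule pi_bip[OF bipPS]) simp_all

lemma S_ob[simp]: "X \<in> Ob C \<Longrightarrow> S X \<in> Ob C" unfolding S_def by simp
lemma P1_hom[simp]: "X \<in> Ob C \<Longrightarrow> P1 X \<in> Hom C (S X) X" unfolding S_def P1_def by simp
lemma P2_hom[simp]: "X \<in> Ob C \<Longrightarrow> P2 X \<in> Hom C (S X) (Po X)" unfolding S_def P2_def by simp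
lemma I1_hom[simp]: "X \<in> Ob C \<Longrightarrow> I1 X \<in> Hom C X (S X)" unfolding S_def I1_def by simp
lemma I2_hom[simp]: "X \<in> Ob C \<Longrightarrow> I2 X \<in> Hom C (Po X) (S X)" unfolding S_def I2_def by simp
lemma PI11[simp]: "X \<in> Ob C \<Longrightarrow> Cmp C X (S X) X (P1 X) (I1 X) = Id C X" unfolding S_def P1_def I1_def by simp
lemma PI22[simp]: "X \<in> Ob C \<Longrightarrow> Cmp C (Po X) (S X) (Po X) (P2 X) (I2 X) = Id C (Po X)" unfolding S_def P2_def I2_def by simp
lemma PI12[simp]: "X \<in> Ob C \<Longrightarrow> Cmp C (Po X) (S X) X (P1 X) (I2 X) = Zero C (Po X) X" unfolding S_def P1_def I2_def by simp
lemma PI21[simp]: "X \<in> Ob C \<Longrightarrow> Cmp C X (S X) (Po X) (P2 X) (I1 X) = Zero C X (Po X)" unfolding S_def P2_def I1_def by simp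

definition "phi X = Add C (Po (S X)) (S X)
   (Cmp C (Po (S X)) (Po X) (S X) (I2 X) (Pa (S X) X (P1 X)))
   (Cmp C (Po (S X)) X (S X) (I1 X) (Cmp C (Po (S X)) (Po (Po X)) X (Xi C X) (Pa (S X) (Po X) (P2 X))))"
definition "phinv X = Add C (S X) (Po (S X))
   (Cmp C (S X) (Po X) (Po (S X)) (Pa X (S X) (I1 X)) (P2 X))
   (Cmp C (S X) (Po (Po X)) (Po (S X)) (Pa (Po X) (S X) (I2 X)) (Cmp C (S X) X (Po (Po X)) (xinv X) (P1 X)))"
definition "psi X = Add C (S X) (S X) (Cmp C (S X) X (S X) (I1 X) (P1 X))
   (Smul C (S X) (S X) (-1) (Cmp C (S X) (Po X) (S X) (I2 X) (P2 X)))"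
definition "FO X = ((S X, phi X), psi X)"
definition "FA X Y f = Add C (S X) (S Y) (Cmp C (S X) Y (S Y) (I1 Y) (Cmp C (S X) X Y f (P1 X)))
   (Cmp C (S X) (Po Y) (S Y) (I2 Y) (Cmp C (S X) (Po X) (Po Y) (Pa X Y f) (P2 X)))"

lemma phi_hom[simp]: "X \<in> Ob C \<Longrightarrow> phi X \<in> Hom C (Po (S X)) (S X)" unfolding phi_def by simp
lemma phinv_hom[simp]: "X \<in> Ob C \<Longrightarrow> phinv X \<in> Hom C (S X) (Po (S X))" unfolding phinv_def by simp
lemma psi_hom[simp]: "X \<in> Ob C \<Longrightarrow> psi X \<in> Hom C (S X) (S X)" unfolding psi_def by simp
lemma FA_hom[simp]: "X \<in> Ob C \<Longrightarrow> Y \<in> Ob C \<Longrightarrow> f \<in> Hom C X Y \<Longrightarrow> FA X Y f \<in> Hom C (S X) (S Y)" unfolding FA_def by simp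

lemma phi_phinv: "X \<in> Ob C \<Longrightarrow> Cmp C (S X) (Po (S X)) (S X) (phi X) (phinv X) = Id C (S X)"
  by (rule ext4[OF bipS[of X] bipS[of X]]) (simp_all add: phi_def phinv_def)
lemma phinv_phi: "X \<in> Ob C \<Longrightarrow> Cmp C (Po (S X)) (S X) (Po (S X)) (phinv X) (phi X) = Id C (Po (S X))"
  by (rule ext4[OF bipPS[of X] bipPS[of X]]) (simp_all add: phi_def phinv_def)

lemma phi_comp: "X \<in> Ob C \<Longrightarrow> Cmp C (Po (Po (S X))) (Po (S X)) (S X) (phi X) (Pa (Po (S X)) (S X) (phi X)) = Xi C (S X)"
  by (rule ext4[OF bipPPS[of X] bipS[of X]])
     (simp_all add: phi_def xi_nat_h[of "S X" X _ "P1 X"] xi_nat_h[of "S X" "Po X" _ "P2 X"])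

lemma psi_psi: "X \<in> Ob C \<Longrightarrow> Cmp C (S X) (S X) (S X) (psi X) (psi X) = Id C (S X)"
  by (rule ext4[OF bipS[of X] bipS[of X]]) (simp_all add: psi_def)
lemma psi_ct1: "X \<in> Ob C \<Longrightarrow> Cmp C (Po (S X)) (S X) (S X) (psi X) (Smul C (Po (S X)) (S X) (-1) (phi X)) =
   Cmp C (Po (S X)) (Po (S X)) (S X) (phi X) (Pa (S X) (S X) (psi X))"
  by (rule ext4[OF bipPS[of X] bipS[of X]]) (simp_all add: psi_def phi_def)
lemma psi_ct2: "X \<in> Ob C \<Longrightarrow> Cmp C (Po (S X)) (S X) (S X) (psi X) (phi X) =
   Cmp C (Po (S X)) (Po (S X)) (S X) (Smul C (Po (S X)) (S X) (-1) (phi X)) (Pa (S X) (S X) (psi X))"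
  by (rule ext4[OF bipPS[of X] bipS[of X]]) (simp_all add: psi_def phi_def)

lemma FA_phi: "X \<in> Ob C \<Longrightarrow> Y \<in> Ob C \<Longrightarrow> f \<in> Hom C X Y \<Longrightarrow>
  Cmp C (Po (S X)) (S X) (S Y) (FA X Y f) (phi X) = Cmp C (Po (S X)) (Po (S Y)) (S Y) (phi Y) (Pa (S X) (S Y) (FA X Y f))"
  by (rule ext4[OF bipPS[of X] bipS[of Y]]) (simp_all add: FA_def phi_def xi_nat_h[of X Y _ f])
lemma FA_psi: "X \<in> Ob C \<Longrightarrow> Y \<in> Ob C \<Longrightarrow> f \<in> Hom C X Y \<Longrightarrow>
  Cmp C (S X) (S X) (S Y) (FA X Y f) (psi X) = Cmp C (S X) (S Y) (S Y) (psi Y) (FA X Y f)"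
  by (rule ext4[OF bipS[of X] bipS[of Y]]) (simp_all add: FA_def psi_def)
lemma FA_id: "X \<in> Ob C \<Longrightarrow> FA X X (Id C X) = Id C (S X)"
  by (rule ext4[OF bipS[of X] bipS[of X]]) (simp_all add: FA_def)
lemma FA_cmp: "X \<in> Ob C \<Longrightarrow> Y \<in> Ob C \<Longrightarrow> Z \<in> Ob C \<Longrightarrow> f \<in> Hom C X Y \<Longrightarrow> g \<in> Hom C Y Z \<Longrightarrow>
  FA X Z (Cmp C X Y Z g f) = Cmp C (S X) (S Y) (S Z) (FA Y Z g) (FA X Y f)"
  by (rule ext4[OF bipS[of X] bipS[of Z]]) (simp_all add: FA_def)

lemma FO_ob: "X \<in> Ob C \<Longrightarrow> FO X \<in> Ob (ct (ct C))"
  unfolding FO_def ctct_Ob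
proof (intro conjI)
  assume X: "X \<in> Ob C"
  show "S X \<in> Ob C" using X by simp
  show "iso C (Po (S X)) (S X) (phi X)" unfolding iso_def using X phi_phinv[OF X] phinv_phi[OF X] phinv_hom[OF X] by auto
  show "Cmp C (Po (Po (S X))) (Po (S X)) (S X) (phi X) (Pa (Po (S X)) (S X) (phi X)) = Xi C (S X)" using X by (rule phi_comp)
  show "Cmp C (S X) (S X) (S X) (psi X) (psi X) = Id C (S X)" using X by (rule psi_psi)
  show "iso (ct C) (S X, Smul C (Po (S X)) (S X) (- 1) (phi X)) (S X, phi X) (psi X)"
  proof -
    have h1: "psi X \<in> Hom (ct C) (S X, Smul C (Po (S X)) (S X) (- 1) (phi X)) (S X, phi X)"
      unfolding ct_Hom using psi_ct1[OF X] psi_hom[OF X] by blast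
    have h2: "psi X \<in> Hom (ct C) (S X, phi X) (S X, Smul C (Po (S X)) (S X) (- 1) (phi X))"
      unfolding ct_Hom using psi_ct2[OF X] psi_hom[OF X] by blast
    show ?thesis unfolding iso_def using h1 h2 psi_psi[OF X] by auto
  qed
qed

lemma FA_ctct: "X \<in> Ob C \<Longrightarrow> Y \<in> Ob C \<Longrightarrow> f \<in> Hom C X Y \<Longrightarrow> FA X Y f \<in> Hom (ct (ct C)) (FO X) (FO Y)"
  unfolding FO_def ctct_Hom using FA_phi FA_psi by simp

lemma F_functor: "functor_on C (ct (ct C)) FO FA"
  unfolding functor_on_def using FO_ob FA_ctct FA_id FA_cmp by (simp add: FO_def)

lemma F_faithful: "X \<in> Ob C \<Longrightarrow> Y \<in> Ob C \<Longrightarrow> f \<in> Hom C X Y \<Longrightarrow> g \<in> Hom C X Y \<Longrightarrow> FA X Y f = FA X Y g \<Longrightarrow> f = g"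
proof -
  assume a: "X \<in> Ob C" "Y \<in> Ob C" "f \<in> Hom C X Y" "g \<in> Hom C X Y" "FA X Y f = FA X Y g"
  have "\<And>h. h \<in> Hom C X Y \<Longrightarrow> Cmp C X (S Y) Y (P1 Y) (Cmp C X (S X) (S Y) (FA X Y h) (I1 X)) = h"
    using a by (simp add: FA_def)
  thus ?thesis using a by metis
qed

end



context SC
begin

definition "alpha X = Add C (S (Po X)) (S X)
  (Cmp C (S (Po X)) X (S X) (I1 X) (Cmp C (S (Po X)) (Po (Po X)) X (Xi C X) (P2 (Po X))))
  (Cmp C (S (Po X)) (Po X) (S X) (I2 X) (P1 (Po X)))"
definition "alinv X = Add C (S X) (S (Po X))
  (Cmp C (S X) (Po X) (S (Po X)) (I1 (Po X)) (P2 X))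
  (Cmp C (S X) (Po (Po X)) (S (Po X)) (I2 (Po X)) (Cmp C (S X) X (Po (Po X)) (xinv X) (P1 X)))"

lemma alpha_hom[simp]: "X \<in> Ob C \<Longrightarrow> alpha X \<in> Hom C (S (Po X)) (S X)" unfolding alpha_def by simp
lemma alinv_hom[simp]: "X \<in> Ob C \<Longrightarrow> alinv X \<in> Hom C (S X) (S (Po X))" unfolding alinv_def by simp

lemma alpha_alinv: "X \<in> Ob C \<Longrightarrow> Cmp C (S X) (S (Po X)) (S X) (alpha X) (alinv X) = Id C (S X)"
  by (rule ext4[OF bipS[of X] bipS[of X]]) (simp_all add: alpha_def alinv_def)
lemma alinv_alpha: "X \<in> Ob C \<Longrightarrow> Cmp C (S (Po X)) (S X) (S (Po X)) (alinv X) (alpha X) = Id C (S (Po X))"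
  by (rule ext4[OF bipS[of "Po X"] bipS[of "Po X"]]) (simp_all add: alpha_def alinv_def)
lemma alpha_phi: "X \<in> Ob C \<Longrightarrow> Cmp C (Po (S (Po X))) (S (Po X)) (S X) (alpha X) (phi (Po X)) =
   Cmp C (Po (S (Po X))) (Po (S X)) (S X) (phi X) (Pa (S (Po X)) (S X) (alpha X))"
  by (rule ext4[OF bipPS[of "Po X"] bipS[of X]]) (simp_all add: alpha_def phi_def)
lemma alpha_psi: "X \<in> Ob C \<Longrightarrow> Cmp C (S (Po X)) (S (Po X)) (S X) (alpha X) (psi (Po X)) =
   Cmp C (S (Po X)) (S X) (S X) (Smul C (S X) (S X) (-1) (psi X)) (alpha X)"
  by (rule ext4[OF bipS[of "Po X"] bipS[of X]]) (simp_all add: alpha_def psi_def)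
lemma alpha_nat: "X \<in> Ob C \<Longrightarrow> Y \<in> Ob C \<Longrightarrow> f \<in> Hom C X Y \<Longrightarrow>
  Cmp C (S (Po X)) (S X) (S Y) (FA X Y f) (alpha X) = Cmp C (S (Po X)) (S (Po Y)) (S Y) (alpha Y) (FA (Po X) (Po Y) (Pa X Y f))"
  by (rule ext4[OF bipS[of "Po X"] bipS[of Y]]) (simp_all add: alpha_def FA_def xi_nat_h[of X Y _ f])
lemma alpha_coh: "X \<in> Ob C \<Longrightarrow>
  Cmp C (S (Po (Po X))) (S (Po X)) (S X) (alpha X) (alpha (Po X)) = FA (Po (Po X)) X (Xi C X)"
  by (rule ext4[OF bipS[of "Po (Po X)"] bipS[of X]]) (simp_all add: alpha_def FA_def)

lemma ctct_iso: assumes X: "X \<in> Ob C" "Y \<in> Ob C" and ph: "\<phi> \<in> Hom C (Po X) X" "\<phi>' \<in> Hom C (Po Y) Y"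
  "\<psi> \<in> Hom C X X" "\<psi>' \<in> Hom C Y Y"
  and u: "u \<in> Hom (ct (ct C)) ((X, \<phi>), \<psi>) ((Y, \<phi>'), \<psi>')" and v: "v \<in> Hom C Y X"
  and vu: "Cmp C X Y X v u = Id C X" and uv: "Cmp C Y X Y u v = Id C Y"
  shows "iso (ct (ct C)) ((X, \<phi>), \<psi>) ((Y, \<phi>'), \<psi>') u"
proof -
  have uh: "u \<in> Hom C X Y" and u1: "Cmp C (Po X) X Y u \<phi> = Cmp C (Po X) (Po Y) Y \<phi>' (Pa X Y u)"
    and u2: "Cmp C X X Y u \<psi> = Cmp C X Y Y \<psi>' u" using u unfolding ctct_Hom by auto
  have puv: "Cmp C (Po Y) (Po X) (Po Y) (Pa X Y u) (Pa Y X v) = Id C (Po Y)"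
    using uv X uh v by (metis pi_cmp pi_id)
  have "Cmp C (Po Y) Y X v \<phi>' = Cmp C (Po Y) Y X v (Cmp C (Po Y) (Po Y) Y \<phi>' (Cmp C (Po Y) (Po X) (Po Y) (Pa X Y u) (Pa Y X v)))"
    using puv X ph by simp
  also have "\<dots> = Cmp C (Po Y) Y X v (Cmp C (Po Y) (Po X) Y (Cmp C (Po X) (Po Y) Y \<phi>' (Pa X Y u)) (Pa Y X v))"
    using X ph uh v by simp
  also have "\<dots> = Cmp C (Po Y) Y X v (Cmp C (Po Y) (Po X) Y (Cmp C (Po X) X Y u \<phi>) (Pa Y X v))"
    using u1 by simp
  also have "\<dots> = Cmp C (Po Y) X X (Cmp C X Y X v u) (Cmp C (Po Y) (Po X) X \<phi> (Pa Y X v))"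
    using X ph uh v by simp
  also have "\<dots> = Cmp C (Po Y) (Po X) X \<phi> (Pa Y X v)" using vu X ph v by simp
  finally have v1: "Cmp C (Po Y) Y X v \<phi>' = Cmp C (Po Y) (Po X) X \<phi> (Pa Y X v)" .
  have "Cmp C Y Y X v \<psi>' = Cmp C Y Y X v (Cmp C Y Y Y \<psi>' (Cmp C Y X Y u v))"
    using uv X ph by simp
  also have "\<dots> = Cmp C Y Y X v (Cmp C Y X Y (Cmp C X Y Y \<psi>' u) v)"
    using X ph uh v by simp
  also have "\<dots> = Cmp C Y Y X v (Cmp C Y X Y (Cmp C X X Y u \<psi>) v)"
    using u2 by simp
  also have "\<dots> = Cmp C Y X X (Cmp C X Y X v u) (Cmp C Y X X \<psi> v)"
    using X ph uh v by simp
  also have "\<dots> = Cmp C Y X X \<psi> v" using vu X ph v by simp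
  finally have v2: "Cmp C Y Y X v \<psi>' = Cmp C Y X X \<psi> v" .
  have vD: "v \<in> Hom (ct (ct C)) ((Y, \<phi>'), \<psi>') ((X, \<phi>), \<psi>)" unfolding ctct_Hom using v v1 v2 by blast
  show ?thesis unfolding iso_def using u vD vu uv by auto
qed

lemma F_super: "superfunctor C (ct (ct C)) FO FA alpha"
  unfolding superfunctor_def
proof (intro conjI)
  show "functor_on C (ct (ct C)) FO FA" by (rule F_functor)
  show "nat_iso C (ct (ct C)) (\<lambda>X. FO (PiO C X)) (\<lambda>X Y f. FA (PiO C X) (PiO C Y) (PiA C X Y f))
     (\<lambda>X. PiO (ct (ct C)) (FO X)) (\<lambda>X Y f. PiA (ct (ct C)) (FO X) (FO Y) (FA X Y f)) alpha"
    unfolding nat_iso_def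
  proof (intro conjI ballI)
    fix X assume X: "X \<in> Ob C"
    show "iso (ct (ct C)) (FO (PiO C X)) (PiO (ct (ct C)) (FO X)) (alpha X)"
      unfolding FO_def ctct_PiO
    proof (rule ctct_iso[where v="alinv X"])
      show "alpha X \<in> Hom (ct (ct C)) ((S (Po X), phi (Po X)), psi (Po X)) ((S X, phi X), Smul C (S X) (S X) (- 1) (psi X))"
        unfolding ctct_Hom using X alpha_phi alpha_psi by simp
    qed (use X alpha_alinv alinv_alpha in simp_all)
  next
    fix X Y f assume a: "X \<in> Ob C" "Y \<in> Ob C" "f \<in> Hom C X Y"
    show "Cmp (ct (ct C)) (FO (PiO C X)) (PiO (ct (ct C)) (FO X)) (PiO (ct (ct C)) (FO Y))
           (PiA (ct (ct C)) (FO X) (FO Y) (FA X Y f)) (alpha X) =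
          Cmp (ct (ct C)) (FO (PiO C X)) (FO (PiO C Y)) (PiO (ct (ct C)) (FO Y)) (alpha Y)
           (FA (PiO C X) (PiO C Y) (PiA C X Y f))"
      unfolding FO_def using a alpha_nat by simp
  qed
  show "\<forall>X\<in>Ob C.
       Cmp (ct (ct C)) (FO (PiO C (PiO C X))) (PiO (ct (ct C)) (PiO (ct (ct C)) (FO X))) (FO X)
         (Xi (ct (ct C)) (FO X))
         (Cmp (ct (ct C)) (FO (PiO C (PiO C X))) (PiO (ct (ct C)) (FO (PiO C X))) (PiO (ct (ct C)) (PiO (ct (ct C)) (FO X)))
            (PiA (ct (ct C)) (FO (PiO C X)) (PiO (ct (ct C)) (FO X)) (alpha X))
            (alpha (PiO C X)))
       = FA (PiO C (PiO C X)) X (Xi C X)"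
    unfolding FO_def using alpha_coh by simp
qed

end



context SC
begin

lemma ctct_ob_parts: "((X, \<phi>), \<psi>) \<in> Ob (ct (ct C)) \<Longrightarrow> X \<in> Ob C \<and> \<phi> \<in> Hom C (Po X) X \<and> \<psi> \<in> Hom C X X"
  unfolding ctct_Ob iso_def ct_Hom by blast

lemma ctct_cat: "category (ct (ct C))"
  unfolding category_def
proof (intro conjI ballI)
  fix A assume "A \<in> Ob (ct (ct C))"
  moreover obtain X \<phi> \<psi> where A: "A = ((X, \<phi>), \<psi>)" by (metis prod.exhaust)
  ultimately have p: "X \<in> Ob C" "\<phi> \<in> Hom C (Po X) X" "\<psi> \<in> Hom C X X" using ctct_ob_parts by auto
  show "Id (ct (ct C)) A \<in> Hom (ct (ct C)) A A" unfolding A ctct_Hom using p by simp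
next
  fix A B E f g assume a: "A \<in> Ob (ct (ct C))" "B \<in> Ob (ct (ct C))" "E \<in> Ob (ct (ct C))"
    "f \<in> Hom (ct (ct C)) A B" "g \<in> Hom (ct (ct C)) B E"
  obtain X \<phi> \<psi> where A: "A = ((X, \<phi>), \<psi>)" by (metis prod.exhaust)
  obtain Y \<phi>' \<psi>' where B: "B = ((Y, \<phi>'), \<psi>')" by (metis prod.exhaust)
  obtain Z \<phi>'' \<psi>'' where E: "E = ((Z, \<phi>''), \<psi>'')" by (metis prod.exhaust)
  have p: "X \<in> Ob C" "\<phi> \<in> Hom C (Po X) X" "\<psi> \<in> Hom C X X" "Y \<in> Ob C" "\<phi>' \<in> Hom C (Po Y) Y" "\<psi>' \<in> Hom C Y Y"
     "Z \<in> Ob C" "\<phi>'' \<in> Hom C (Po Z) Z" "\<psi>'' \<in> Hom C Z Z" using a ctct_ob_parts unfolding A B E by auto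
  have f: "f \<in> Hom C X Y" "Cmp C (Po X) X Y f \<phi> = Cmp C (Po X) (Po Y) Y \<phi>' (Pa X Y f)" "Cmp C X X Y f \<psi> = Cmp C X Y Y \<psi>' f"
    using a(4) unfolding A B ctct_Hom by auto
  have g: "g \<in> Hom C Y Z" "Cmp C (Po Y) Y Z g \<phi>' = Cmp C (Po Y) (Po Z) Z \<phi>'' (Pa Y Z g)" "Cmp C Y Y Z g \<psi>' = Cmp C Y Z Z \<psi>'' g"
    using a(5) unfolding B E ctct_Hom by auto
  have 1: "Cmp C (Po X) X Z (Cmp C X Y Z g f) \<phi> = Cmp C (Po X) (Po Z) Z \<phi>'' (Pa X Z (Cmp C X Y Z g f))"
  proof -
    have "Cmp C (Po X) X Z (Cmp C X Y Z g f) \<phi> = Cmp C (Po X) Y Z g (Cmp C (Po X) X Y f \<phi>)" using p f g by simp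
    also have "\<dots> = Cmp C (Po X) (Po Y) Z (Cmp C (Po Y) Y Z g \<phi>') (Pa X Y f)" using p f(1,2) g(1) by simp
    also have "\<dots> = Cmp C (Po X) (Po Z) Z \<phi>'' (Pa X Z (Cmp C X Y Z g f))" using p f(1) g(1,2) by simp
    finally show ?thesis .
  qed
  have 2: "Cmp C X X Z (Cmp C X Y Z g f) \<psi> = Cmp C X Z Z \<psi>'' (Cmp C X Y Z g f)"
  proof -
    have "Cmp C X X Z (Cmp C X Y Z g f) \<psi> = Cmp C X Y Z g (Cmp C X X Y f \<psi>)" using p f g by simp
    also have "\<dots> = Cmp C X Y Z (Cmp C Y Y Z g \<psi>') f" using p f(1,3) g(1) by simp
    also have "\<dots> = Cmp C X Z Z \<psi>'' (Cmp C X Y Z g f)" using p f(1) g(1,3) by simp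
    finally show ?thesis .
  qed
  show "Cmp (ct (ct C)) A B E g f \<in> Hom (ct (ct C)) A E" unfolding A B E ctct_Hom using 1 2 p f g by simp
next
  fix A B f assume a: "A \<in> Ob (ct (ct C))" "B \<in> Ob (ct (ct C))" "f \<in> Hom (ct (ct C)) A B"
  obtain X \<phi> \<psi> where A: "A = ((X, \<phi>), \<psi>)" by (metis prod.exhaust)
  obtain Y \<phi>' \<psi>' where B: "B = ((Y, \<phi>'), \<psi>')" by (metis prod.exhaust)
  have p: "X \<in> Ob C" "Y \<in> Ob C" using a ctct_ob_parts unfolding A B by auto
  have f: "f \<in> Hom C X Y" using a(3) unfolding A B ctct_Hom by auto
  show "Cmp (ct (ct C)) A B B (Id (ct (ct C)) B) f = f" "Cmp (ct (ct C)) A A B f (Id (ct (ct C)) A) = f"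
    unfolding A B using p f by simp_all
next
  fix A B E G f g h assume a: "A \<in> Ob (ct (ct C))" "B \<in> Ob (ct (ct C))" "E \<in> Ob (ct (ct C))" "G \<in> Ob (ct (ct C))"
    "f \<in> Hom (ct (ct C)) A B" "g \<in> Hom (ct (ct C)) B E" "h \<in> Hom (ct (ct C)) E G"
  obtain X \<phi> \<psi> where A: "A = ((X, \<phi>), \<psi>)" by (metis prod.exhaust)
  obtain Y \<phi>' \<psi>' where B: "B = ((Y, \<phi>'), \<psi>')" by (metis prod.exhaust)
  obtain Z \<phi>'' \<psi>'' where E: "E = ((Z, \<phi>''), \<psi>'')" by (metis prod.exhaust)
  obtain W \<phi>3 \<psi>3 where G: "G = ((W, \<phi>3), \<psi>3)" by (metis prod.exhaust)
  have p: "X \<in> Ob C" "Y \<in> Ob C" "Z \<in> Ob C" "W \<in> Ob C" using a ctct_ob_parts unfolding A B E G by auto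
  have f: "f \<in> Hom C X Y" "g \<in> Hom C Y Z" "h \<in> Hom C Z W" using a(5-7) unfolding A B E G ctct_Hom by auto
  show "Cmp (ct (ct C)) A E G h (Cmp (ct (ct C)) A B E g f) = Cmp (ct (ct C)) A B G (Cmp (ct (ct C)) B E G h g) f"
    unfolding A B E G using p f by simp
qed

end

locale SC2 = SC C for C :: "('o, 'm, 'k::comm_ring_1) scat" +
  assumes two: "(2::'k) dvd 1"
begin

lemma neg_self_zero: assumes X: "X \<in> Ob C" "Y \<in> Ob C" and x: "x \<in> Hom C X Y"
  and e: "x = Smul C X Y (-1) x" shows "x = Zero C X Y"
proof -
  obtain h :: 'k where h: "1 = 2 * h" using two by (auto elim: dvdE)
  have xx: "Add C X Y x x = Zero C X Y" using add_neg[OF X x] e by simp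
  have "x = Smul C X Y (h + h) x" using h X x by (simp add: mult_2[symmetric] mult.commute)
  also have "\<dots> = Smul C X Y h (Add C X Y x x)" by (simp only: add_smul[OF X x] smul_add[OF X x x])
  also have "\<dots> = Zero C X Y" using xx X by simp
  finally show ?thesis .
qed

lemma F_full: assumes X: "X \<in> Ob C" "Y \<in> Ob C" and g: "g \<in> Hom (ct (ct C)) (FO X) (FO Y)"
  shows "\<exists>f\<in>Hom C X Y. FA X Y f = g"
proof -
  have gh: "g \<in> Hom C (S X) (S Y)"
    and g1: "Cmp C (Po (S X)) (S X) (S Y) g (phi X) = Cmp C (Po (S X)) (Po (S Y)) (S Y) (phi Y) (Pa (S X) (S Y) g)"
    and g2: "Cmp C (S X) (S X) (S Y) g (psi X) = Cmp C (S X) (S Y) (S Y) (psi Y) g"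
    using g unfolding FO_def ctct_Hom by auto
  define f where "f = Cmp C X (S Y) Y (P1 Y) (Cmp C X (S X) (S Y) g (I1 X))"
  have fh: "f \<in> Hom C X Y" unfolding f_def using X gh by simp
  have "Cmp C X (S Y) (Po Y) (P2 Y) (Cmp C X (S X) (S Y) (Cmp C (S X) (S X) (S Y) g (psi X)) (I1 X)) =
        Cmp C X (S Y) (Po Y) (P2 Y) (Cmp C X (S X) (S Y) (Cmp C (S X) (S Y) (S Y) (psi Y) g) (I1 X))"
    by (simp only: g2)
  hence "Cmp C X (S Y) (Po Y) (P2 Y) (Cmp C X (S X) (S Y) g (I1 X)) =
     Smul C X (Po Y) (-1) (Cmp C X (S Y) (Po Y) (P2 Y) (Cmp C X (S X) (S Y) g (I1 X)))"
    using X gh by (simp add: psi_def)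
  hence c21: "Cmp C X (S Y) (Po Y) (P2 Y) (Cmp C X (S X) (S Y) g (I1 X)) = Zero C X (Po Y)"
    by (rule neg_self_zero[rotated 3]) (use X gh in simp_all)
  have "Cmp C (Po X) (S Y) Y (P1 Y) (Cmp C (Po X) (S X) (S Y) (Cmp C (S X) (S X) (S Y) g (psi X)) (I2 X)) =
        Cmp C (Po X) (S Y) Y (P1 Y) (Cmp C (Po X) (S X) (S Y) (Cmp C (S X) (S Y) (S Y) (psi Y) g) (I2 X))"
    by (simp only: g2)
  hence "Smul C (Po X) Y (-1) (Cmp C (Po X) (S Y) Y (P1 Y) (Cmp C (Po X) (S X) (S Y) g (I2 X))) =
     Cmp C (Po X) (S Y) Y (P1 Y) (Cmp C (Po X) (S X) (S Y) g (I2 X))"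
    using X gh by (simp add: psi_def)
  hence c12: "Cmp C (Po X) (S Y) Y (P1 Y) (Cmp C (Po X) (S X) (S Y) g (I2 X)) = Zero C (Po X) Y"
    by (rule neg_self_zero[rotated 3, OF sym]) (use X gh in simp_all)
  have "Cmp C (Po X) (S Y) (Po Y) (P2 Y) (Cmp C (Po X) (Po (S X)) (S Y) (Cmp C (Po (S X)) (S X) (S Y) g (phi X)) (Pa X (S X) (I1 X))) =
        Cmp C (Po X) (S Y) (Po Y) (P2 Y) (Cmp C (Po X) (Po (S X)) (S Y) (Cmp C (Po (S X)) (Po (S Y)) (S Y) (phi Y) (Pa (S X) (S Y) g)) (Pa X (S X) (I1 X)))"
    by (simp only: g1)
  hence c22: "Cmp C (Po X) (S Y) (Po Y) (P2 Y) (Cmp C (Po X) (S X) (S Y) g (I2 X)) =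
     Cmp C (Po X) (Po (S Y)) (Po Y) (Pa (S Y) Y (P1 Y)) (Cmp C (Po X) (Po (S X)) (Po (S Y)) (Pa (S X) (S Y) g) (Pa X (S X) (I1 X)))"
    using X gh by (simp add: phi_def)
  have "FA X Y f = g"
    by (rule ext4[OF bipS[of X] bipS[of Y]]) (use X gh c21 c12 c22 in \<open>simp_all add: FA_def f_def\<close>)
  thus ?thesis using fh by blast
qed

end



context SC
begin

lemma absorb[simp]: "Cmp C X Y Y g f = f \<Longrightarrow> W \<in> Ob C \<Longrightarrow> X \<in> Ob C \<Longrightarrow> Y \<in> Ob C \<Longrightarrow>
  f \<in> Hom C X Y \<Longrightarrow> g \<in> Hom C Y Y \<Longrightarrow> h \<in> Hom C W X \<Longrightarrow> Cmp C W Y Y g (Cmp C W X Y f h) = Cmp C W X Y f h"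
  by (metis assoc)
lemma pi_absorb[simp]: "Cmp C X Y Y g f = f \<Longrightarrow> X \<in> Ob C \<Longrightarrow> Y \<in> Ob C \<Longrightarrow>
  f \<in> Hom C X Y \<Longrightarrow> g \<in> Hom C Y Y \<Longrightarrow> Cmp C (Po X) (Po Y) (Po Y) (Pa Y Y g) (Pa X Y f) = Pa X Y f"
  by (metis pi_cmp)

lemma add_swap4: "X \<in> Ob C \<Longrightarrow> Y \<in> Ob C \<Longrightarrow> a \<in> Hom C X Y \<Longrightarrow> b \<in> Hom C X Y \<Longrightarrow>
  Add C X Y (Add C X Y a b) (Add C X Y a b) = Add C X Y (Add C X Y a a) (Add C X Y b b)"
  by (metis add_assoc add_comm add_hom)

lemma add_pm: "X \<in> Ob C \<Longrightarrow> Y \<in> Ob C \<Longrightarrow> a \<in> Hom C X Y \<Longrightarrow> b \<in> Hom C X Y \<Longrightarrow>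
  Add C X Y (Add C X Y a b) (Add C X Y a (Smul C X Y (-1) b)) = Add C X Y a a"
proof -
  assume a: "X \<in> Ob C" "Y \<in> Ob C" "a \<in> Hom C X Y" "b \<in> Hom C X Y"
  have "Add C X Y (Add C X Y a b) (Add C X Y a (Smul C X Y (-1) b)) =
        Add C X Y a (Add C X Y a (Add C X Y b (Smul C X Y (-1) b)))"
    using a by (metis add_assoc add_comm add_hom smul_hom)
  thus ?thesis using a by simp
qed

end

context SC2
begin

lemma half_eq: assumes X: "X \<in> Ob C" "Y \<in> Ob C" and x: "x \<in> Hom C X Y" "y \<in> Hom C X Y"
  and e: "Add C X Y x x = Add C X Y y y" shows "x = y"
proof -
  obtain h :: 'k where h: "1 = 2 * h" using two by (auto elim: dvdE)
  have "x = Smul C X Y (h + h) x" using h X x by (simp add: mult_2[symmetric] mult.commute)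
  also have "\<dots> = Smul C X Y h (Add C X Y x x)" by (simp only: add_smul[OF X x(1)] smul_add[OF X x(1) x(1)])
  also have "\<dots> = Smul C X Y h (Add C X Y y y)" using e by simp
  also have "\<dots> = Smul C X Y (h + h) y" by (simp only: add_smul[OF X x(2)] smul_add[OF X x(2) x(2)])
  also have "\<dots> = y" using h X x by (simp add: mult_2[symmetric] mult.commute)
  finally show ?thesis .
qed

lemma double_zero: "X \<in> Ob C \<Longrightarrow> Y \<in> Ob C \<Longrightarrow> x \<in> Hom C X Y \<Longrightarrow> Add C X Y x x = Zero C X Y \<Longrightarrow> x = Zero C X Y"
  by (rule half_eq[of X Y]) simp_all

lemma half_sum: assumes X: "X \<in> Ob C" obtains e where "e \<in> Hom C X X" "Add C X X e e = Id C X"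
proof -
  obtain h :: 'k where h: "1 = 2 * h" using two by (auto elim: dvdE)
  have "Add C X X (Smul C X X h (Id C X)) (Smul C X X h (Id C X)) = Smul C X X (h + h) (Id C X)"
    by (simp only: add_smul[OF X X id_hom[OF X]])
  also have "\<dots> = Id C X" using h X by (simp add: mult_2[symmetric] mult.commute)
  finally have eq: "Add C X X (Smul C X X h (Id C X)) (Smul C X X h (Id C X)) = Id C X" .
  show ?thesis by (rule that[OF _ eq]) (use X in simp)
qed

end

locale SC3 = SC2 C for C :: "('o, 'm, 'k::comm_ring_1) scat" +
  assumes ic: "idem_complete C"
begin

lemma ess_surj: assumes A: "A \<in> Ob (ct (ct C))" shows "\<exists>X\<in>Ob C. \<exists>u. iso (ct (ct C)) (FO X) A u"
proof -
  obtain Y ph ps where Aeq: "A = ((Y, ph), ps)" by (metis prod.exhaust)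
  have Y: "Y \<in> Ob C" and phiso: "iso C (Po Y) Y ph"
    and ct1: "iso (ct C) (Y, Smul C (Po Y) Y (-1) ph) (Y, ph) ps" and pp: "Cmp C Y Y Y ps ps = Id C Y"
    using A unfolding Aeq ctct_Ob by auto
  obtain pv where ph: "ph \<in> Hom C (Po Y) Y" and pv: "pv \<in> Hom C Y (Po Y)"
    and pvph[simp]: "Cmp C (Po Y) Y (Po Y) pv ph = Id C (Po Y)" and phpv[simp]: "Cmp C Y (Po Y) Y ph pv = Id C Y"
    using phiso unfolding iso_def by blast
  have ps: "ps \<in> Hom C Y Y" and anti: "Cmp C (Po Y) Y Y ps (Smul C (Po Y) Y (-1) ph) = Cmp C (Po Y) (Po Y) Y ph (Pa Y Y ps)"
    using ct1 unfolding iso_def ct_Hom by auto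
  note [simp] = Y ph pv ps pp
  have anti2: "Cmp C (Po Y) (Po Y) Y ph (Pa Y Y ps) = Smul C (Po Y) Y (-1) (Cmp C (Po Y) Y Y ps ph)"
    using anti by simp
  have anti2h: "Cmp C W (Po Y) Y ph (Cmp C W (Po Y) (Po Y) (Pa Y Y ps) h) = Smul C W Y (-1) (Cmp C W Y Y ps (Cmp C W (Po Y) Y ph h))"
    if "W \<in> Ob C" "h \<in> Hom C W (Po Y)" for W h
    using that anti2 by (metis assoc cmp_smul_l pi_hom pi_ob cmp_hom ps ph Y)
  have antih: "Cmp C W Y Y ps (Cmp C W (Po Y) Y ph h) = Smul C W Y (-1) (Cmp C W (Po Y) Y ph (Cmp C W (Po Y) (Po Y) (Pa Y Y ps) h))"
    if "W \<in> Ob C" "h \<in> Hom C W (Po Y)" for W h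
    using anti2h[OF that] that by simp
  obtain e where e: "e \<in> Hom C Y Y" and ee2: "Add C Y Y e e = Add C Y Y (Id C Y) ps"
  proof -
    obtain hh where hh: "hh \<in> Hom C Y Y" "Add C Y Y hh hh = Id C Y" using half_sum[OF Y] by blast
    let ?e = "Cmp C Y Y Y hh (Add C Y Y (Id C Y) ps)"
    have "Add C Y Y ?e ?e = Cmp C Y Y Y (Add C Y Y hh hh) (Add C Y Y (Id C Y) ps)" by (rule cmp_add_l[symmetric]) (use hh in simp_all)
    also have "\<dots> = Add C Y Y (Id C Y) ps" using hh by simp
    finally have eq: "Add C Y Y ?e ?e = Add C Y Y (Id C Y) ps" .
    show ?thesis by (rule that[OF _ eq]) (use hh in simp)
  qed
  note [simp] = e
  have pse: "Cmp C Y Y Y ps e = e"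
  proof (rule half_eq[of Y Y])
    have "Add C Y Y (Cmp C Y Y Y ps e) (Cmp C Y Y Y ps e) = Cmp C Y Y Y ps (Add C Y Y e e)" by simp
    also have "\<dots> = Add C Y Y ps (Id C Y)" using ee2 by simp
    also have "\<dots> = Add C Y Y e e" using ee2 add_comm by simp
    finally show "Add C Y Y (Cmp C Y Y Y ps e) (Cmp C Y Y Y ps e) = Add C Y Y e e" .
  qed simp_all
  have eee: "Cmp C Y Y Y e e = e"
  proof (rule half_eq[of Y Y])
    have "Add C Y Y (Cmp C Y Y Y e e) (Cmp C Y Y Y e e) = Cmp C Y Y Y (Add C Y Y e e) e" by simp
    also have "\<dots> = Add C Y Y e e" using ee2 pse by simp
    finally show "Add C Y Y (Cmp C Y Y Y e e) (Cmp C Y Y Y e e) = Add C Y Y e e" .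
  qed simp_all
  define p where "p = Add C Y Y (Id C Y) (Smul C Y Y (-1) e)"
  have p: "p \<in> Hom C Y Y" unfolding p_def by simp
  have pe: "Cmp C Y Y Y p e = Zero C Y Y" unfolding p_def using eee by simp
  have pp': "Cmp C Y Y Y p p = p" unfolding p_def using eee by simp
  have ep: "Add C Y Y e p = Id C Y" unfolding p_def
    by (metis add_assoc add_comm add_neg e id_hom smul_hom zero_r Y)
  obtain K k where ker: "is_kernel C Y Y p K k" using ic[unfolded idem_complete_def, rule_format, OF Y p pp'] by blast
  have K: "K \<in> Ob C" and k: "k \<in> Hom C K Y" and pk: "Cmp C K Y Y p k = Zero C K Y"
    and univ: "\<And>W f. W \<in> Ob C \<Longrightarrow> f \<in> Hom C W Y \<Longrightarrow> Cmp C W Y Y p f = Zero C W Y \<Longrightarrow>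
        \<exists>g\<in>Hom C W K. Cmp C W K Y k g = f \<and> (\<forall>g'\<in>Hom C W K. Cmp C W K Y k g' = f \<longrightarrow> g' = g)"
    using ker unfolding is_kernel_def by auto
  note [simp] = K k
  have ek: "Cmp C K Y Y e k = k"
  proof -
    have "k = Cmp C K Y Y (Add C Y Y e p) k" using ep by simp
    also have "\<dots> = Cmp C K Y Y e k" using pk p by simp
    finally show ?thesis by simp
  qed
  have psk: "Cmp C K Y Y ps k = k"
  proof -
    have "Cmp C K Y Y ps k = Cmp C K Y Y ps (Cmp C K Y Y e k)" using ek by simp
    also have "\<dots> = Cmp C K Y Y (Cmp C Y Y Y ps e) k" by simp
    also have "\<dots> = k" using pse ek by simp
    finally show ?thesis .
  qed
  obtain r where r: "r \<in> Hom C Y K" and kr: "Cmp C Y K Y k r = e" using univ[of Y e] pe by auto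
  note [simp] = r
  have rk: "Cmp C K Y K r k = Id C K"
  proof -
    obtain g where "g \<in> Hom C K K" "Cmp C K K Y k g = k" "\<forall>g'\<in>Hom C K K. Cmp C K K Y k g' = k \<longrightarrow> g' = g"
      using univ[of K k] pk by auto
    moreover have "Cmp C K K Y k (Cmp C K Y K r k) = k" using kr ek by (simp flip: assoc)
    ultimately show ?thesis by (metis cmp_hom id_hom id_r K k r Y)
  qed
  have re: "Cmp C Y Y K r e = r" using kr rk by (metis assoc id_l k r K Y)
  note [simp] = ek psk rk
  have krh: "Cmp C W K Y k (Cmp C W Y K r h) = Cmp C W Y Y e h" if "W \<in> Ob C" "h \<in> Hom C W Y" for W h
    using that kr by (metis assoc k r K Y)
  have pkrh: "Cmp C W (Po K) (Po Y) (Pa K Y k) (Cmp C W (Po Y) (Po K) (Pa Y K r) h) = Cmp C W (Po Y) (Po Y) (Pa Y Y e) h"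
    if "W \<in> Ob C" "h \<in> Hom C W (Po Y)" for W h
    using that kr by (metis assoc pi_cmp pi_hom pi_ob k r K Y)
  let ?z = "Cmp C (Po K) (Po Y) Y ph (Pa K Y k)"
  have ez: "Cmp C (Po K) Y Y e ?z = Zero C (Po K) Y"
  proof (rule double_zero[of "Po K" Y])
    have "Add C (Po K) Y (Cmp C (Po K) Y Y e ?z) (Cmp C (Po K) Y Y e ?z) = Cmp C (Po K) Y Y (Add C Y Y e e) ?z" by simp
    also have "\<dots> = Add C (Po K) Y ?z (Cmp C (Po K) Y Y ps ?z)" using ee2 by simp
    also have "\<dots> = Zero C (Po K) Y" using antih[of "Po K" "Pa K Y k"] by simp
    finally show "Add C (Po K) Y (Cmp C (Po K) Y Y e ?z) (Cmp C (Po K) Y Y e ?z) = Zero C (Po K) Y" .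
  qed simp_all
  have H1: "Cmp C (Po K) Y K r ?z = Zero C (Po K) K"
  proof -
    have "Cmp C (Po K) Y K r ?z = Cmp C (Po K) Y K (Cmp C Y Y K r e) ?z" using re by simp
    also have "\<dots> = Zero C (Po K) K" using ez by (simp del: cmp_add_l cmp_add_r)
    finally show ?thesis .
  qed
  let ?w = "Cmp C K Y (Po Y) pv k"
  have t1: "Pa Y Y ps = Smul C (Po Y) (Po Y) (-1) (Cmp C (Po Y) Y (Po Y) pv (Cmp C (Po Y) Y Y ps ph))"
  proof -
    have "Pa Y Y ps = Cmp C (Po Y) Y (Po Y) pv (Cmp C (Po Y) (Po Y) Y ph (Pa Y Y ps))" by simp
    also have "\<dots> = Cmp C (Po Y) Y (Po Y) pv (Smul C (Po Y) Y (- 1) (Cmp C (Po Y) Y Y ps ph))" by (simp only: anti2)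
    also have "\<dots> = Smul C (Po Y) (Po Y) (-1) (Cmp C (Po Y) Y (Po Y) pv (Cmp C (Po Y) Y Y ps ph))" by simp
    finally show ?thesis .
  qed
  have Pw: "Cmp C K (Po Y) (Po Y) (Pa Y Y ps) ?w = Smul C K (Po Y) (-1) ?w"
  proof -
    have "Cmp C K (Po Y) (Po Y) (Pa Y Y ps) ?w = Cmp C K (Po Y) (Po Y) (Smul C (Po Y) (Po Y) (-1) (Cmp C (Po Y) Y (Po Y) pv (Cmp C (Po Y) Y Y ps ph))) ?w"
      by (subst t1) (rule refl)
    also have "\<dots> = Smul C K (Po Y) (-1) ?w" by simp
    finally show ?thesis .
  qed
  have Pee: "Add C (Po Y) (Po Y) (Pa Y Y e) (Pa Y Y e) = Add C (Po Y) (Po Y) (Id C (Po Y)) (Pa Y Y ps)"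
    using ee2 by (metis pi_add pi_id e ps Y id_hom)
  have Pew: "Cmp C K (Po Y) (Po Y) (Pa Y Y e) ?w = Zero C K (Po Y)"
  proof (rule double_zero[of K "Po Y"])
    have "Add C K (Po Y) (Cmp C K (Po Y) (Po Y) (Pa Y Y e) ?w) (Cmp C K (Po Y) (Po Y) (Pa Y Y e) ?w) =
          Cmp C K (Po Y) (Po Y) (Add C (Po Y) (Po Y) (Pa Y Y e) (Pa Y Y e)) ?w" by simp
    also have "\<dots> = Add C K (Po Y) ?w (Cmp C K (Po Y) (Po Y) (Pa Y Y ps) ?w)" unfolding Pee by simp
    also have "\<dots> = Zero C K (Po Y)" unfolding Pw by simp
    finally show "Add C K (Po Y) (Cmp C K (Po Y) (Po Y) (Pa Y Y e) ?w) (Cmp C K (Po Y) (Po Y) (Pa Y Y e) ?w) = Zero C K (Po Y)" .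
  qed simp_all
  have H2: "Cmp C K (Po Y) (Po K) (Pa Y K r) ?w = Zero C K (Po K)"
  proof -
    have "Pa Y K r = Pa Y K (Cmp C Y Y K r e)" using re by simp
    hence "Cmp C K (Po Y) (Po K) (Pa Y K r) ?w = Cmp C K (Po Y) (Po K) (Cmp C (Po Y) (Po Y) (Po K) (Pa Y K r) (Pa Y Y e)) ?w"
      by simp
    also have "\<dots> = Cmp C K (Po Y) (Po K) (Pa Y K r) (Cmp C K (Po Y) (Po Y) (Pa Y Y e) ?w)" by (simp del: pi_cmp)
    also have "\<dots> = Zero C K (Po K)" using Pew by simp
    finally show ?thesis .
  qed
  let ?q = "Cmp C Y (Po Y) Y ph (Cmp C Y (Po Y) (Po Y) (Pa Y Y e) pv)"
  have qq: "Add C Y Y ?q ?q = Add C Y Y (Id C Y) (Smul C Y Y (-1) ps)"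
  proof -
    have "Add C Y Y ?q ?q = Cmp C Y (Po Y) Y ph (Cmp C Y (Po Y) (Po Y) (Add C (Po Y) (Po Y) (Pa Y Y e) (Pa Y Y e)) pv)"
      by simp
    also have "\<dots> = Add C Y Y (Id C Y) (Cmp C Y (Po Y) Y ph (Cmp C Y (Po Y) (Po Y) (Pa Y Y ps) pv))" unfolding Pee by simp
    also have "\<dots> = Add C Y Y (Id C Y) (Smul C Y Y (-1) ps)" using anti2h[of Y pv] by simp
    finally show ?thesis .
  qed
  have H3: "Add C Y Y e ?q = Id C Y"
  proof (rule half_eq[of Y Y])
    have "Add C Y Y (Add C Y Y e ?q) (Add C Y Y e ?q) = Add C Y Y (Add C Y Y e e) (Add C Y Y ?q ?q)"
      by (rule add_swap4) simp_all
    also have "\<dots> = Add C Y Y (Id C Y) (Id C Y)" unfolding ee2 qq by (rule add_pm) simp_all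
    finally show "Add C Y Y (Add C Y Y e ?q) (Add C Y Y e ?q) = Add C Y Y (Id C Y) (Id C Y)" .
  qed simp_all
  define u where "u = Add C (S K) Y (Cmp C (S K) K Y k (P1 K))
      (Cmp C (S K) (Po Y) Y ph (Cmp C (S K) (Po K) (Po Y) (Pa K Y k) (P2 K)))"
  define v where "v = Add C Y (S K) (Cmp C Y K (S K) (I1 K) r)
      (Cmp C Y (Po K) (S K) (I2 K) (Cmp C Y (Po Y) (Po K) (Pa Y K r) pv))"
  have uh: "u \<in> Hom C (S K) Y" unfolding u_def by simp
  have vh: "v \<in> Hom C Y (S K)" unfolding v_def by simp
  have phcomp: "Cmp C (Po (Po Y)) (Po Y) Y ph (Pa (Po Y) Y ph) = Xi C Y" using A unfolding Aeq ctct_Ob by auto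
  have phch: "Cmp C W (Po Y) Y ph (Cmp C W (Po (Po Y)) (Po Y) (Pa (Po Y) Y ph) h) = Cmp C W (Po (Po Y)) Y (Xi C Y) h"
    if "W \<in> Ob C" "h \<in> Hom C W (Po (Po Y))" for W h
    using that phcomp by (metis assoc pi_hom pi_ob ph Y)
  have u1: "Cmp C (Po (S K)) (S K) Y u (phi K) = Cmp C (Po (S K)) (Po Y) Y ph (Pa (S K) Y u)"
    by (rule bip_ext[OF bipPS[of K], where T=Y])
       (use uh in \<open>simp_all add: u_def phi_def phch xi_nat[of K Y k]\<close>)
  have u2: "Cmp C (S K) (S K) Y u (psi K) = Cmp C (S K) Y Y ps u"
    by (rule bip_ext[OF bipS[of K], where T=Y])
       (use uh in \<open>simp_all add: u_def psi_def antih\<close>)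
  have vu: "Cmp C (S K) Y (S K) v u = Id C (S K)"
    by (rule ext4[OF bipS[of K] bipS[of K]]) (use uh vh H1 H2 in \<open>simp_all add: u_def v_def\<close>)
  have uv: "Cmp C Y (S K) Y u v = Id C Y"
  proof -
    have "Cmp C Y (S K) Y u v = Add C Y Y e ?q" by (simp add: u_def v_def krh pkrh kr)
    thus ?thesis using H3 by simp
  qed
  have uD: "u \<in> Hom (ct (ct C)) (FO K) A" unfolding FO_def Aeq ctct_Hom using uh u1 u2 by blast
  have "iso (ct (ct C)) (FO K) A u" unfolding FO_def Aeq
    by (rule ctct_iso[where v=v]) (use uD[unfolded FO_def Aeq] vh vu uv in simp_all)
  thus ?thesis using K by blast
qed

end

theorem mainTheorem11:
  fixes C :: "('o, 'm, 'k::comm_ring_1) scat"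
  assumes "(2::'k) dvd 1"
    and "supercategory C"
    and "idem_complete C"
  shows "\<exists>FO FA alpha. super_equivalence C (ct (ct C)) FO FA alpha"
proof -
  interpret SC3 C by (intro SC3.intro SC2.intro SC.intro SC3_axioms.intro SC2_axioms.intro) (use assms in auto)
  have "equivalence C (ct (ct C)) FO FA"
    by (rule ff_es_equiv[OF catC ctct_cat F_functor F_faithful F_full ess_surj])
  hence "super_equivalence C (ct (ct C)) FO FA alpha"
    unfolding super_equivalence_def using F_super by blast
  thus ?thesis by blast
qed

end
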